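(* For $n\ge1$ let $T_n=\{(n-r,1^r):0\le r\le n-1\}$ be the set of hook partitions of $n$, and let $Hk_n=\sum_{\mu\in T_n}p_\mu$. Then $Hk_n$ is Schur-positive. Moreover, if $n$ is odd then every Schur function $s_\lambda$, $\lambda\vdash n$, appears in $Hk_n$ with positive coefficient, while if $n$ is even then every $s_\lambda$ with $\lambda\vdash n$ appears with positive coefficient except $s_{(1^n)}$, which does not appear.
   Context: $p_\mu=\prod_i p_{\mu_i}$ denotes the power sum symmetric function; Schur-positive means a nonnegative integer combination of Schur functions $s_\lambda$. *)

theory Defs
  imports Main
begin

text \<open>Symmetric functions (of bounded degree) in countably many variables x_0, x_1, ...
  are represented by their coefficient functions: a formal power series is a map
  from exponent vectors (alpha :: nat => nat, the monomial prod_i x_i^(alpha i))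
  to integer coefficients.  Only finitely supported exponent vectors correspond to
  monomials; all series below vanish on the others.\<close>

type_synonym fps_coeffs = "(nat \<Rightarrow> nat) \<Rightarrow> int"

definition one_ser :: fps_coeffs where
  "one_ser \<alpha> = (if \<alpha> = (%_. 0) then 1 else 0)"

definition mult_ser :: "fps_coeffs \<Rightarrow> fps_coeffs \<Rightarrow> fps_coeffs" where
  "mult_ser f g \<alpha> = (\<Sum>\<beta>\<in>{\<beta>. \<forall>i. \<beta> i \<le> \<alpha> i}. f \<beta> * g (%i. \<alpha> i - \<beta> i))"

definition power_sum :: "nat \<Rightarrow> fps_coeffs" where
  "power_sum k \<alpha> = (if \<exists>j. \<alpha> = (%i. if i = j then k else 0) then 1 else 0)"

definition power_sum_part :: "nat list \<Rightarrow> fps_coeffs" where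
  "power_sum_part mu = foldr (%k f. mult_ser (power_sum k) f) mu one_ser"

definition is_partition :: "nat \<Rightarrow> nat list \<Rightarrow> bool" where
  "is_partition n la \<longleftrightarrow> sorted_wrt (\<ge>) la \<and> 0 \<notin> set la \<and> sum_list la = n"

definition cells :: "nat list \<Rightarrow> (nat \<times> nat) set" where
  "cells la = {(i, j). i < length la \<and> j < la ! i}"

definition ssyt :: "nat list \<Rightarrow> (nat \<Rightarrow> nat) \<Rightarrow> ((nat \<times> nat) \<Rightarrow> nat) set" where
  "ssyt la \<alpha> = {T. (\<forall>c. c \<notin> cells la \<longrightarrow> T c = 0)
      \<and> (\<forall>i j. (i, Suc j) \<in> cells la \<longrightarrow> T (i, j) \<le> T (i, Suc j))
      \<and> (\<forall>i j. (Suc i, j) \<in> cells la \<longrightarrow> T (i, j) < T (Suc i, j))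
      \<and> (\<forall>k. card {c \<in> cells la. T c = k} = \<alpha> k)}"

definition schur :: "nat list \<Rightarrow> fps_coeffs" where
  "schur la \<alpha> = int (card (ssyt la \<alpha>))"

definition hook :: "nat \<Rightarrow> nat \<Rightarrow> nat list" where
  "hook n r = (n - r) # replicate r 1"

definition Hk :: "nat \<Rightarrow> fps_coeffs" where
  "Hk n \<alpha> = (\<Sum>r<n. power_sum_part (hook n r) \<alpha>)"

end

theory Submission
  imports Defs
begin


definition pt :: "nat list \<Rightarrow> nat \<Rightarrow> nat" where
  "pt la i = (if i < length la then la ! i else 0)"

definition Parts :: "nat \<Rightarrow> nat list set" where
  "Parts n = {la. is_partition n la}"

definition hsf :: "(nat \<Rightarrow> nat) \<Rightarrow> (nat \<Rightarrow> nat) \<Rightarrow> bool" where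
  "hsf g f \<longleftrightarrow> (\<forall>i. f (Suc i) \<le> g i \<and> g i \<le> f i)"

definition hs :: "nat list \<Rightarrow> nat list \<Rightarrow> bool" where
  "hs ka la \<longleftrightarrow> hsf (pt ka) (pt la)"

definition decr :: "(nat \<Rightarrow> nat) \<Rightarrow> bool" where
  "decr f \<longleftrightarrow> (\<forall>i. f (Suc i) \<le> f i)"

definition mk :: "(nat \<Rightarrow> nat) \<Rightarrow> nat \<Rightarrow> nat list" where
  "mk f N = takeWhile (\<lambda>x. 0 < x) (map f [0..<N])"

lemma cells_pt: "cells la = {(i, j). j < pt la i}"
  unfolding cells_def pt_def by (auto split: if_splits)

lemma nz_nth: "0 \<notin> set (la::nat list) \<Longrightarrow> i < length la \<Longrightarrow> 0 < la ! i"
  by (auto simp: in_set_conv_nth)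

lemma decr_mono: "decr f \<Longrightarrow> i \<le> j \<Longrightarrow> f j \<le> f i"
  unfolding decr_def by (induction j) (auto simp: le_Suc_eq intro: order_trans)

lemma part_pt_pos: "is_partition n la \<Longrightarrow> (0 < pt la i) = (i < length la)"
proof -
  assume "is_partition n la"
  hence "0 \<notin> set la" by (simp add: is_partition_def)
  thus ?thesis unfolding pt_def by (auto simp: nz_nth)
qed

lemma part_decr: "is_partition n la \<Longrightarrow> decr (pt la)"
  unfolding decr_def is_partition_def pt_def sorted_wrt_iff_nth_less
  by (auto simp: )

lemma sum_list_pt: "length la \<le> N \<Longrightarrow> sum_list la = (\<Sum>i<N. pt la i)"
proof -
  assume "length la \<le> N"
  have "sum_list la = (\<Sum>i<length la. la ! i)" by (simp add: sum_list_sum_nth atLeast0LessThan)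
  also have "\<dots> = (\<Sum>i<length la. pt la i)" by (simp add: pt_def)
  also have "\<dots> = (\<Sum>i<N. pt la i)"
    using \<open>length la \<le> N\<close> by (intro sum.mono_neutral_left) (auto simp: pt_def)
  finally show ?thesis .
qed

lemma finite_cells: "finite (cells la)"
proof -
  have "cells la \<subseteq> {..<length la} \<times> {..<Max (insert 0 (set la))}"
    unfolding cells_def by (auto intro!: order.strict_trans2[OF _ Max_ge])
  thus ?thesis by (rule finite_subset) auto
qed

lemma card_cells: "card (cells la) = sum_list la"
proof -
  have "cells la = (\<Union>i<length la. {i} \<times> {..<la ! i})" unfolding cells_def by auto
  hence "card (cells la) = (\<Sum>i<length la. card ({i} \<times> {..<la ! i}))"
    by (simp only:) (rule card_UN_disjoint; blast)
  also have "\<dots> = (\<Sum>i<length la. la ! i)" by simp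
  also have "\<dots> = sum_list la" by (simp add: sum_list_sum_nth atLeast0LessThan)
  finally show ?thesis .
qed

lemma pt_inj:
  assumes "0 \<notin> set la" "0 \<notin> set lb" "pt la = pt lb"
  shows "la = lb"
proof -
  have A: "(0 < pt la i) = (i < length la)" for i using assms(1) unfolding pt_def
    by (auto simp: nz_nth)
  have B: "(0 < pt lb i) = (i < length lb)" for i using assms(2) unfolding pt_def
    by (auto simp: nz_nth)
  have "length la = length lb" using A B assms(3)
    by (metis linorder_neqE_nat less_irrefl)
  moreover have "\<forall>i<length la. la ! i = lb ! i" using assms(3) \<open>length la = length lb\<close>
    unfolding pt_def by (metis)
  ultimately show ?thesis by (simp add: list_eq_iff_nth_eq)
qed

lemma part_inj: "is_partition n la \<Longrightarrow> is_partition m lb \<Longrightarrow> pt la = pt lb \<Longrightarrow> la = lb"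
  unfolding is_partition_def using pt_inj by blast

lemma cells_inj: "is_partition n la \<Longrightarrow> is_partition m lb \<Longrightarrow> cells la = cells lb \<Longrightarrow> la = lb"
proof -
  assume a: "is_partition n la" "is_partition m lb" "cells la = cells lb"
  have "pt la i = pt lb i" for i
  proof -
    have "\<forall>j. (j < pt la i) = (j < pt lb i)" using a(3) unfolding cells_pt by blast
    thus ?thesis by (metis linorder_neqE_nat less_irrefl)
  qed
  thus ?thesis using part_inj a by blast
qed

lemma mk_props:
  assumes "decr f" "\<forall>i\<ge>N. f i = 0"
  shows "pt (mk f N) = f" "is_partition (\<Sum>i<N. f i) (mk f N)" "length (mk f N) \<le> N"
proof -
  define L where "L = length (mk f N)"
  have pre: "mk f N = take L (map f [0..<N])" unfolding L_def mk_def by (metis takeWhile_eq_take)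
  have LN: "L \<le> N" unfolding L_def mk_def by (metis length_map length_takeWhile_le length_upt minus_nat.diff_0)
  have nth: "i < L \<Longrightarrow> mk f N ! i = f i" for i using pre LN by simp
  have pos: "i < L \<Longrightarrow> 0 < f i" for i
    using nth unfolding L_def mk_def by (metis nth_mem set_takeWhileD)
  have zero: "L \<le> i \<Longrightarrow> f i = 0" for i
  proof (cases "L < N")
    case True
    have "\<not> 0 < map f [0..<N] ! L"
      using nth_length_takeWhile[of "\<lambda>x. 0 < x" "map f [0..<N]"] True LN
      unfolding L_def mk_def by simp
    hence "f L = 0" using True by simp
    moreover assume "L \<le> i"
    ultimately show ?thesis using decr_mono[OF assms(1)] by (metis le_zero_eq)
  next
    case False
    assume "L \<le> i" thus ?thesis using False LN assms(2) by auto
  qed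
  show pf: "pt (mk f N) = f"
    by (rule ext) (auto simp: pt_def L_def[symmetric] nth zero)
  show "length (mk f N) \<le> N" using LN L_def by simp
  have "0 \<notin> set (mk f N)" unfolding mk_def by (auto dest: set_takeWhileD)
  moreover have "sorted_wrt (\<ge>) (mk f N)"
    unfolding sorted_wrt_iff_nth_less using decr_mono[OF assms(1)] nth L_def
    by (simp add: less_imp_le)
  moreover have "sum_list (mk f N) = (\<Sum>i<N. f i)"
    using sum_list_pt[of "mk f N" N] pf LN L_def by simp
  ultimately show "is_partition (\<Sum>i<N. f i) (mk f N)" unfolding is_partition_def by simp
qed

lemma mk_pt: "is_partition n la \<Longrightarrow> length la \<le> N \<Longrightarrow> mk (pt la) N = la"
proof -
  assume a: "is_partition n la" "length la \<le> N"
  have "\<forall>i\<ge>N. pt la i = 0" using a(2) by (auto simp: pt_def)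
  from mk_props[OF part_decr[OF a(1)] this] show ?thesis using part_inj a(1) by blast
qed

lemma finite_Parts: "finite (Parts n)"
proof -
  have "Parts n \<subseteq> {xs. set xs \<subseteq> {..n} \<and> length xs \<le> n}"
  proof
    fix la assume "la \<in> Parts n"
    hence p: "is_partition n la" by (simp add: Parts_def)
    hence "sum_list la = n" "0 \<notin> set la" by (auto simp: is_partition_def)
    moreover have "x \<in> set la \<Longrightarrow> x \<le> sum_list la" for x by (simp add: member_le_sum_list)
    moreover have "length la \<le> sum_list la" using \<open>0 \<notin> set la\<close>
    proof (induction la)
      case (Cons a la) thus ?case by (cases a) auto
    qed simp
    ultimately show "la \<in> {xs. set xs \<subseteq> {..n} \<and> length xs \<le> n}" by auto
  qed
  thus ?thesis by (rule finite_subset) (rule finite_lists_length_le, simp)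
qed

lemma part_sum: "is_partition n la \<Longrightarrow> sum_list la = n" by (simp add: is_partition_def)



definition K :: "nat list \<Rightarrow> (nat \<Rightarrow> nat) \<Rightarrow> nat" where
  "K la \<alpha> = card (ssyt la \<alpha>)"

definition HS :: "nat list \<Rightarrow> nat \<Rightarrow> nat list set" where
  "HS la a = {ka \<in> Parts (sum_list la - a). a \<le> sum_list la \<and> hs ka la}"

lemma ssytD:
  assumes "T \<in> ssyt la \<alpha>"
  shows "\<And>c. c \<notin> cells la \<Longrightarrow> T c = 0"
    "\<And>i j. (i, Suc j) \<in> cells la \<Longrightarrow> T (i, j) \<le> T (i, Suc j)"
    "\<And>i j. (Suc i, j) \<in> cells la \<Longrightarrow> T (i, j) < T (Suc i, j)"
    "\<And>k. card {c \<in> cells la. T c = k} = \<alpha> k"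
  using assms unfolding ssyt_def by auto

lemma ssyt_val:
  assumes "T \<in> ssyt la \<alpha>" "c \<in> cells la"
  shows "0 < \<alpha> (T c)"
proof -
  have fin: "finite {c' \<in> cells la. T c' = T c}" using finite_cells[of la] by simp
  have "{c' \<in> cells la. T c' = T c} \<noteq> {}" using assms(2) by blast
  hence "card {c' \<in> cells la. T c' = T c} > 0" using fin card_gt_0_iff by blast
  thus ?thesis using ssytD(4)[OF assms(1)] by simp
qed

lemma cells_left: "(i, j') \<in> cells la \<Longrightarrow> j \<le> j' \<Longrightarrow> (i, j) \<in> cells la"
  unfolding cells_pt by auto

lemma cells_up: "is_partition n la \<Longrightarrow> (i', j) \<in> cells la \<Longrightarrow> i \<le> i' \<Longrightarrow> (i, j) \<in> cells la"
  unfolding cells_pt using decr_mono[OF part_decr] by (auto intro: order.strict_trans2)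

lemma row_mono:
  assumes "T \<in> ssyt la \<alpha>" "(i, j') \<in> cells la" "j \<le> j'"
  shows "T (i, j) \<le> T (i, j')"
  using assms(2,3)
proof (induction j')
  case 0 thus ?case by simp
next
  case (Suc j')
  show ?case
  proof (cases "j = Suc j'")
    case False
    hence "j \<le> j'" using Suc.prems by simp
    moreover have "(i, j') \<in> cells la" using cells_left[OF Suc.prems(1)] by simp
    ultimately have "T (i, j) \<le> T (i, j')" using Suc.IH by simp
    also have "\<dots> \<le> T (i, Suc j')" using ssytD(2)[OF assms(1) Suc.prems(1)] .
    finally show ?thesis .
  qed simp
qed

lemma col_mono:
  assumes "is_partition n la" "T \<in> ssyt la \<alpha>" "(i', j) \<in> cells la" "i < i'"
  shows "T (i, j) < T (i', j)"
  using assms(3,4)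
proof (induction i')
  case 0 thus ?case by simp
next
  case (Suc i')
  have c: "(i', j) \<in> cells la" using cells_up[OF assms(1) Suc.prems(1)] by simp
  have st: "T (i', j) < T (Suc i', j)" using ssytD(3)[OF assms(2) Suc.prems(1)] .
  show ?case
  proof (cases "i = i'")
    case False
    hence "i < i'" using Suc.prems by simp
    hence "T (i, j) < T (i', j)" using Suc.IH c by simp
    thus ?thesis using st by simp
  qed (use st in simp)
qed

lemma ssyt_empty_inf:
  assumes "infinite {k. \<alpha> k \<noteq> 0}"
  shows "ssyt la \<alpha> = {}"
proof (rule ccontr)
  assume "ssyt la \<alpha> \<noteq> {}"
  then obtain T where T: "T \<in> ssyt la \<alpha>" by blast
  have "{k. \<alpha> k \<noteq> 0} \<subseteq> T ` cells la"
  proof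
    fix k assume "k \<in> {k. \<alpha> k \<noteq> 0}"
    hence "card {c \<in> cells la. T c = k} \<noteq> 0" using ssytD(4)[OF T] by simp
    hence "{c \<in> cells la. T c = k} \<noteq> {}" by (metis card.empty)
    thus "k \<in> T ` cells la" by blast
  qed
  moreover have "finite (T ` cells la)" using finite_cells by simp
  ultimately show False using assms finite_subset by blast
qed

lemma finite_ssyt: "finite (ssyt la \<alpha>)"
proof (cases "finite {k. \<alpha> k \<noteq> 0}")
  case True
  have "ssyt la \<alpha> \<subseteq> {f. \<forall>x. (x \<in> cells la \<longrightarrow> f x \<in> {k. \<alpha> k \<noteq> 0}) \<and> (x \<notin> cells la \<longrightarrow> f x = 0)}"
    using ssyt_val ssytD(1) by fastforce
  thus ?thesis using finite_set_of_finite_funs[OF finite_cells True] by (rule finite_subset)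
qed (simp add: ssyt_empty_inf)

lemma K_inf: "infinite {k. \<alpha> k \<noteq> 0} \<Longrightarrow> K la \<alpha> = 0"
  by (simp add: K_def ssyt_empty_inf)

lemma K_zero:
  assumes "is_partition n la"
  shows "K la (\<lambda>_. 0) = (if la = [] then 1 else 0)"
proof (cases "la = []")
  case True
  have "ssyt [] (\<lambda>_. 0) = {\<lambda>_. 0}"
    unfolding ssyt_def cells_def by auto
  thus ?thesis using True by (simp add: K_def)
next
  case False
  have "ssyt la (\<lambda>_. 0) = {}"
  proof (rule ccontr)
    assume "ssyt la (\<lambda>_. 0) \<noteq> {}"
    then obtain T where T: "T \<in> ssyt la (\<lambda>_. 0)" by blast
    have "(0, 0) \<in> cells la" using False assms part_pt_pos[OF assms, of 0] unfolding cells_pt by simp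
    from ssyt_val[OF T this] show False by simp
  qed
  thus ?thesis using False by (simp add: K_def)
qed

lemma downclosed_nat:
  assumes "finite (S::nat set)" "\<And>j j'. j \<in> S \<Longrightarrow> j' \<le> j \<Longrightarrow> j' \<in> S"
  shows "S = {..<card S}"
proof (cases "S = {}")
  case False
  have "S = {..Max S}"
  proof
    show "S \<subseteq> {..Max S}" using Max_ge[OF assms(1)] by blast
    show "{..Max S} \<subseteq> S" using assms(2) Max_in[OF assms(1) False] by blast
  qed
  thus ?thesis by (metis card_atMost lessThan_Suc_atMost)
qed simp

lemma HS_facts:
  assumes "ka \<in> HS la a"
  shows "is_partition (sum_list la - a) ka" "a \<le> sum_list la" "\<And>i. pt la (Suc i) \<le> pt ka i"
    "\<And>i. pt ka i \<le> pt la i" "cells ka \<subseteq> cells la" "sum_list ka + a = sum_list la"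
proof -
  have h: "is_partition (sum_list la - a) ka" "a \<le> sum_list la" "hsf (pt ka) (pt la)"
    using assms unfolding HS_def Parts_def hs_def by auto
  show "is_partition (sum_list la - a) ka" "a \<le> sum_list la" using h by auto
  show "\<And>i. pt la (Suc i) \<le> pt ka i" "\<And>i. pt ka i \<le> pt la i" using h(3) unfolding hsf_def by auto
  thus "cells ka \<subseteq> cells la" unfolding cells_pt by (auto intro: order.strict_trans2)
  show "sum_list ka + a = sum_list la" using h(1,2) part_sum by fastforce
qed

lemma branch:
  assumes la: "is_partition n la" and sup: "\<forall>k>m. \<alpha> k = 0"
  shows "K la \<alpha> = (\<Sum>ka\<in>HS la (\<alpha> m). K ka (\<alpha>(m:=0)))"
proof -
  define A where "A = ssyt la \<alpha>"
  define F where "F ka = {T \<in> A. {c \<in> cells la. T c < m} = cells ka}" for ka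
  have Fmem: "T \<in> F ka \<longleftrightarrow> T \<in> A \<and> {c \<in> cells la. T c < m} = cells ka" for T ka
    by (simp only: F_def mem_Collect_eq)
  have val: "T c \<le> m" if "T \<in> A" "c \<in> cells la" for T c
  proof (rule ccontr)
    assume "\<not> T c \<le> m"
    hence "\<alpha> (T c) = 0" using sup by simp
    thus False using ssyt_val[OF that[unfolded A_def]] by simp
  qed
  have finHS: "finite (HS la (\<alpha> m))"
    by (rule finite_subset[OF _ finite_Parts[of "sum_list la - \<alpha> m"]]) (auto simp: HS_def)
  have cover: "A = (\<Union>ka\<in>HS la (\<alpha> m). F ka)"
  proof
    show "(\<Union>ka\<in>HS la (\<alpha> m). F ka) \<subseteq> A" using Fmem by blast
  next
    show "A \<subseteq> (\<Union>ka\<in>HS la (\<alpha> m). F ka)"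
    proof
      fix T assume TA: "T \<in> A"
      hence T: "T \<in> ssyt la \<alpha>" by (simp add: A_def)
      define S where "S i = {j. j < pt la i \<and> T (i, j) < m}" for i
      define g where "g i = card (S i)" for i
      have Sfin: "finite (S i)" for i unfolding S_def by simp
      have Seq: "S i = {..<g i}" for i
        unfolding g_def
      proof (rule downclosed_nat[OF Sfin])
        fix j j' assume "j \<in> S i" "j' \<le> j"
        thus "j' \<in> S i" unfolding S_def
          using row_mono[OF T, of i j j'] unfolding cells_pt by auto
      qed
      have gdec: "decr g" unfolding decr_def
      proof
        fix i
        have "{..<g (Suc i)} \<subseteq> {..<g i}"
        proof (rule subsetI)
          fix j assume "j \<in> {..<g (Suc i)}"
          hence j: "j < pt la (Suc i)" "T (Suc i, j) < m" using Seq[of "Suc i"] unfolding S_def by auto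
          have "(Suc i, j) \<in> cells la" using j by (simp add: cells_pt)
          hence "T (i, j) < T (Suc i, j)" using ssytD(3)[OF T] by simp
          hence t: "T (i, j) < m" using j(2) by linarith
          have "pt la (Suc i) \<le> pt la i" using part_decr[OF la] by (simp add: decr_def)
          hence "j < pt la i" using j(1) by linarith
          hence "j \<in> S i" unfolding S_def using t by simp
          thus "j \<in> {..<g i}" using Seq[of i] by blast
        qed
        thus "g (Suc i) \<le> g i" by simp
      qed
      have gle: "g i \<le> pt la i" for i
      proof -
        have "S i \<subseteq> {..<pt la i}" unfolding S_def by auto
        from card_mono[OF finite_lessThan this] show ?thesis unfolding g_def by simp
      qed
      have gz: "\<forall>i\<ge>length la. g i = 0"
      proof (intro allI impI)
        fix i assume "length la \<le> i"
        hence "pt la i = 0" by (simp add: pt_def)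
        thus "g i = 0" using gle[of i] by simp
      qed
      define ka where "ka = mk g (length la)"
      note mkp = mk_props[OF gdec gz]
      have ptka: "pt ka = g" using mkp ka_def by simp
      have Sj: "(j < g i) = (j < pt la i \<and> T (i, j) < m)" for i j
      proof -
        have "(j < g i) = (j \<in> S i)" using Seq[of i] by simp
        thus ?thesis by (simp add: S_def)
      qed
      have cka: "cells ka = {c \<in> cells la. T c < m}"
        unfolding cells_pt ptka using Sj by auto
      have U: "{c \<in> cells la. T c < m} \<union> {c \<in> cells la. T c = m} = cells la"
        using val[OF TA] le_neq_implies_less by blast
      have "card ({c \<in> cells la. T c < m} \<union> {c \<in> cells la. T c = m})
          = card {c \<in> cells la. T c < m} + card {c \<in> cells la. T c = m}"
        by (rule card_Un_disjoint) (use finite_cells[of la] in auto)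
      hence "card (cells la) = card {c \<in> cells la. T c < m} + card {c \<in> cells la. T c = m}"
        using U by simp
      hence sz: "sum_list ka + \<alpha> m = sum_list la"
      proof -
        have "sum_list ka = card {c \<in> cells la. T c < m}" using card_cells[of ka] cka by simp
        thus ?thesis using ssytD(4)[OF T, of m] \<open>card (cells la) = _\<close> card_cells[of la] by simp
      qed
      have hska: "hs ka la" unfolding hs_def hsf_def ptka
      proof
        fix i
        have "pt la (Suc i) \<le> g i"
        proof -
          have "{..<pt la (Suc i)} \<subseteq> S i"
          proof (rule subsetI)
            fix j assume "j \<in> {..<pt la (Suc i)}"
            hence c: "(Suc i, j) \<in> cells la" by (simp add: cells_pt)
            hence "T (i, j) < T (Suc i, j)" using ssytD(3)[OF T] by simp
            moreover have "T (Suc i, j) \<le> m" using val[OF TA c] .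
            moreover have "j < pt la i" using cells_up[OF la c, of i] by (simp add: cells_pt)
            ultimately show "j \<in> S i" unfolding S_def by simp
          qed
          from card_mono[OF Sfin this] show ?thesis unfolding g_def by simp
        qed
        thus "pt la (Suc i) \<le> g i \<and> g i \<le> pt la i" using gle by simp
      qed
      have p: "is_partition (\<Sum>i<length la. g i) ka" using mkp(2) ka_def by simp
      hence "is_partition (sum_list ka) ka" using part_sum[OF p] by simp
      moreover have "sum_list la - \<alpha> m = sum_list ka" "\<alpha> m \<le> sum_list la" using sz by auto
      ultimately have "ka \<in> HS la (\<alpha> m)" unfolding HS_def Parts_def using hska by simp
      moreover have "T \<in> F ka" unfolding Fmem using TA cka by blast
      ultimately show "T \<in> (\<Union>ka\<in>HS la (\<alpha> m). F ka)" by blast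
    qed
  qed
  have disj: "\<forall>ka\<in>HS la (\<alpha> m). \<forall>kb\<in>HS la (\<alpha> m). ka \<noteq> kb \<longrightarrow> F ka \<inter> F kb = {}"
  proof (intro ballI impI)
    fix ka kb assume h: "ka \<in> HS la (\<alpha> m)" "kb \<in> HS la (\<alpha> m)" "ka \<noteq> kb"
    have "cells ka \<noteq> cells kb" using cells_inj HS_facts(1)[OF h(1)] HS_facts(1)[OF h(2)] h(3) by blast
    thus "F ka \<inter> F kb = {}" using Fmem[of _ ka] Fmem[of _ kb] by blast
  qed
  have finF: "\<forall>ka\<in>HS la (\<alpha> m). finite (F ka)"
  proof
    fix ka
    have "F ka \<subseteq> A" using Fmem by blast
    thus "finite (F ka)" using finite_ssyt[of la \<alpha>] unfolding A_def by (rule finite_subset)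
  qed
  have cardF: "card (F ka) = K ka (\<alpha>(m:=0))" if ka: "ka \<in> HS la (\<alpha> m)" for ka
  proof -
    note hf = HS_facts[OF ka]
    define R where "R T = (\<lambda>c. if c \<in> cells ka then T c else 0)" for T :: "nat \<times> nat \<Rightarrow> nat"
    define E where "E T = (\<lambda>c. if c \<in> cells ka then T c else if c \<in> cells la then m else 0)"
      for T :: "nat \<times> nat \<Rightarrow> nat"
    have kap: "is_partition (sum_list la - \<alpha> m) ka" by (rule hf(1))
    have "bij_betw R (F ka) (ssyt ka (\<alpha>(m:=0)))"
    proof (rule bij_betw_byWitness[where f'=E])
      show "\<forall>T\<in>F ka. E (R T) = T"
      proof
        fix T assume TF: "T \<in> F ka"
        hence TA: "T \<in> A" and ck: "{c \<in> cells la. T c < m} = cells ka" unfolding Fmem by blast+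
        have "E (R T) c = T c" for c
        proof -
          consider "c \<in> cells ka" | "c \<notin> cells ka" "c \<in> cells la" | "c \<notin> cells la" by blast
          thus ?thesis
          proof cases
            case 2
            hence "\<not> T c < m" using ck by blast
            hence "T c = m" using val[OF TA 2(2)] by simp
            thus ?thesis using 2 unfolding E_def R_def by simp
          next
            case 3
            hence "c \<notin> cells ka" using hf(5) by blast
            thus ?thesis using 3 ssytD(1)[OF TA[unfolded A_def]] unfolding E_def R_def by simp
          qed (simp add: E_def R_def)
        qed
        thus "E (R T) = T" by blast
      qed
    next
      show "\<forall>T\<in>ssyt ka (\<alpha>(m:=0)). R (E T) = T"
      proof
        fix T assume T: "T \<in> ssyt ka (\<alpha>(m:=0))"
        show "R (E T) = T"
        proof (rule ext)
          fix c show "R (E T) c = T c" using ssytD(1)[OF T, of c] by (simp add: R_def E_def)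
        qed
      qed
    next
      show "R ` F ka \<subseteq> ssyt ka (\<alpha>(m:=0))"
      proof
        fix T' assume "T' \<in> R ` F ka"
        then obtain T where TF: "T \<in> F ka" and T'd: "T' = R T" by blast
        hence TA: "T \<in> A" and ck: "{c \<in> cells la. T c < m} = cells ka" unfolding Fmem by blast+
        note T = TA[unfolded A_def]
        have "(\<forall>c. c \<notin> cells ka \<longrightarrow> T' c = 0)" unfolding T'd R_def by simp
        moreover have "\<forall>i j. (i, Suc j) \<in> cells ka \<longrightarrow> T' (i, j) \<le> T' (i, Suc j)"
        proof (intro allI impI)
          fix i j assume c: "(i, Suc j) \<in> cells ka"
          have c0: "(i, j) \<in> cells ka" using cells_left[OF c] by simp
          have "(i, Suc j) \<in> cells la" using c hf(5) by blast
          hence "T (i, j) \<le> T (i, Suc j)" by (rule ssytD(2)[OF T])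
          thus "T' (i, j) \<le> T' (i, Suc j)" using c c0 by (simp add: T'd R_def)
        qed
        moreover have "\<forall>i j. (Suc i, j) \<in> cells ka \<longrightarrow> T' (i, j) < T' (Suc i, j)"
        proof (intro allI impI)
          fix i j assume c: "(Suc i, j) \<in> cells ka"
          have c0: "(i, j) \<in> cells ka" using cells_up[OF kap c, of i] by simp
          have "(Suc i, j) \<in> cells la" using c hf(5) by blast
          hence "T (i, j) < T (Suc i, j)" by (rule ssytD(3)[OF T])
          thus "T' (i, j) < T' (Suc i, j)" using c c0 by (simp add: T'd R_def)
        qed
        moreover have "\<forall>k. card {c \<in> cells ka. T' c = k} = (\<alpha>(m:=0)) k"
        proof
          fix k
          have "{c \<in> cells ka. T' c = k} = {c \<in> cells la. T c < m \<and> T c = k}"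
          proof (rule set_eqI)
            fix c
            have "(c \<in> cells ka) = (c \<in> cells la \<and> T c < m)" using ck by blast
            thus "(c \<in> {c \<in> cells ka. T' c = k}) = (c \<in> {c \<in> cells la. T c < m \<and> T c = k})"
              by (auto simp: T'd R_def)
          qed
          show "card {c \<in> cells ka. T' c = k} = (\<alpha>(m:=0)) k"
          proof (cases "k < m")
            case True
            hence "{c \<in> cells ka. T' c = k} = {c \<in> cells la. T c = k}"
              using \<open>{c \<in> cells ka. T' c = k} = _\<close> by auto
            thus ?thesis using ssytD(4)[OF T, of k] True by simp
          next
            case False
            hence "{c \<in> cells ka. T' c = k} = {}"
              using \<open>{c \<in> cells ka. T' c = k} = _\<close> by auto
            hence "card {c \<in> cells ka. T' c = k} = 0" by (simp only: card.empty)
            moreover have "(\<alpha>(m:=0)) k = 0" using False sup by auto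
            ultimately show ?thesis by simp
          qed
        qed
        ultimately show "T' \<in> ssyt ka (\<alpha>(m:=0))" unfolding ssyt_def by blast
      qed
    next
      show "E ` ssyt ka (\<alpha>(m:=0)) \<subseteq> F ka"
      proof
        fix T assume "T \<in> E ` ssyt ka (\<alpha>(m:=0))"
        then obtain T' where T': "T' \<in> ssyt ka (\<alpha>(m:=0))" and Td: "T = E T'" by blast
        have lt: "T' c < m" if "c \<in> cells ka" for c
        proof -
          have "0 < (\<alpha>(m:=0)) (T' c)" using ssyt_val[OF T' that] .
          hence "T' c \<noteq> m" "\<not> m < T' c" using sup by auto
          thus ?thesis by simp
        qed
        have ck: "{c \<in> cells la. T c < m} = cells ka"
        proof (rule set_eqI)
          fix c show "(c \<in> {c \<in> cells la. T c < m}) = (c \<in> cells ka)"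
            using lt[of c] hf(5) by (cases "c \<in> cells ka") (auto simp: Td E_def)
        qed
        have "(\<forall>c. c \<notin> cells la \<longrightarrow> T c = 0)" unfolding Td E_def using hf(5) by (auto simp del: )
        moreover have "\<forall>i j. (i, Suc j) \<in> cells la \<longrightarrow> T (i, j) \<le> T (i, Suc j)"
        proof (intro allI impI)
          fix i j assume c: "(i, Suc j) \<in> cells la"
          have c0: "(i, j) \<in> cells la" using cells_left[OF c] by simp
          show "T (i, j) \<le> T (i, Suc j)"
          proof (cases "(i, Suc j) \<in> cells ka")
            case True
            hence "(i, j) \<in> cells ka" using cells_left[of i "Suc j" ka j] by simp
            thus ?thesis using True ssytD(2)[OF T'] unfolding Td E_def by simp
          next
            case False
            have "T (i, j) \<le> m" using c0 lt[of "(i, j)"] by (auto simp: Td E_def)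
            thus ?thesis using False c by (simp add: Td E_def)
          qed
        qed
        moreover have "\<forall>i j. (Suc i, j) \<in> cells la \<longrightarrow> T (i, j) < T (Suc i, j)"
        proof (intro allI impI)
          fix i j assume c: "(Suc i, j) \<in> cells la"
          show "T (i, j) < T (Suc i, j)"
          proof (cases "(Suc i, j) \<in> cells ka")
            case True
            hence "(i, j) \<in> cells ka" using cells_up[OF kap, of "Suc i" j i] by simp
            thus ?thesis using True ssytD(3)[OF T'] unfolding Td E_def by simp
          next
            case False
            have "(i, j) \<in> cells ka" using c hf(3)[of i] unfolding cells_pt by (auto intro: order.strict_trans2)
            thus ?thesis using c False lt[of "(i, j)"] by (simp add: Td E_def)
          qed
        qed
        moreover have "\<forall>k. card {c \<in> cells la. T c = k} = \<alpha> k"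
        proof
          fix k
          show "card {c \<in> cells la. T c = k} = \<alpha> k"
          proof (cases "k = m")
            case True
            have "{c \<in> cells la. T c = k} = cells la - cells ka"
            proof (rule set_eqI)
              fix c show "(c \<in> {c \<in> cells la. T c = k}) = (c \<in> cells la - cells ka)"
                using True lt[of c] hf(5) by (cases "c \<in> cells ka") (auto simp: Td E_def)
            qed
            hence "card {c \<in> cells la. T c = k} = card (cells la) - card (cells ka)"
              using card_Diff_subset[OF finite_subset[OF hf(5) finite_cells] hf(5)] by simp
            thus ?thesis using hf(6) True by (simp add: card_cells)
          next
            case False
            have "{c \<in> cells la. T c = k} = {c \<in> cells ka. T' c = k}"
            proof (rule set_eqI)
              fix c show "(c \<in> {c \<in> cells la. T c = k}) = (c \<in> {c \<in> cells ka. T' c = k})"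
                using False hf(5) by (cases "c \<in> cells ka") (auto simp: Td E_def)
            qed
            thus ?thesis using ssytD(4)[OF T', of k] False by simp
          qed
        qed
        ultimately have "T \<in> A" unfolding A_def ssyt_def by blast
        thus "T \<in> F ka" unfolding Fmem using ck by blast
      qed
    qed
    thus ?thesis unfolding K_def by (rule bij_betw_same_card)
  qed
  have "K la \<alpha> = card (\<Union>ka\<in>HS la (\<alpha> m). F ka)" unfolding K_def A_def[symmetric] using cover by simp
  also have "\<dots> = (\<Sum>ka\<in>HS la (\<alpha> m). card (F ka))" by (rule card_UN_disjoint[OF finHS finF disj])
  also have "\<dots> = (\<Sum>ka\<in>HS la (\<alpha> m). K ka (\<alpha>(m:=0)))" using cardF by simp
  finally show ?thesis .
qed



definition eu :: "nat \<Rightarrow> nat \<Rightarrow> nat" where "eu r i = (if i = r then 1 else 0)"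

lemma shape_count:
  fixes f g :: "nat \<Rightarrow> nat"
  assumes df: "decr f" and dg: "decr g" and zf: "\<forall>i\<ge>L. f i = 0" and zg: "\<forall>i\<ge>L. g i = 0"
  defines "P \<equiv> \<lambda>r. decr (\<lambda>i. f i + eu r i) \<and> hsf g (\<lambda>i. f i + eu r i)"
    and "Q \<equiv> \<lambda>s. 1 \<le> g s \<and> decr (\<lambda>i. g i - eu s i) \<and> hsf (\<lambda>i. g i - eu s i) f"
  shows "{r. P r} \<subseteq> {..L}" "{s. Q s} \<subseteq> {..<L}"
    "card {r. P r} = (if hsf g f then 1 else 0) + card {s. Q s}"
proof -
  have df': "f (Suc i) \<le> f i" for i using df by (simp add: decr_def)
  have dg': "g (Suc i) \<le> g i" for i using dg by (simp add: decr_def)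
  have Pdef: "P r \<longleftrightarrow> (\<forall>i. f (Suc i) + eu r (Suc i) \<le> f i + eu r i) \<and>
      (\<forall>i. f (Suc i) + eu r (Suc i) \<le> g i \<and> g i \<le> f i + eu r i)" for r
    unfolding P_def decr_def hsf_def by simp
  have Qdef: "Q s \<longleftrightarrow> 1 \<le> g s \<and> (\<forall>i. g (Suc i) - eu s (Suc i) \<le> g i - eu s i) \<and>
      (\<forall>i. f (Suc i) \<le> g i - eu s i \<and> g i - eu s i \<le> f i)" for s
    unfolding Q_def decr_def hsf_def by simp
  show PL: "{r. P r} \<subseteq> {..L}"
  proof (rule subsetI)
    fix r assume "r \<in> {r. P r}"
    hence pr: "P r" by simp
    show "r \<in> {..L}"
    proof (cases r)
      case (Suc r')
      have "f (Suc r') + eu r (Suc r') \<le> f r' + eu r r'" using pr unfolding Pdef by blast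
      hence "0 < f r'" using Suc by (simp add: eu_def)
      have "r' < L"
      proof (rule ccontr)
        assume "\<not> r' < L" hence "f r' = 0" using zf by simp
        thus False using \<open>0 < f r'\<close> by simp
      qed
      thus ?thesis using Suc by simp
    qed simp
  qed
  show QL: "{s. Q s} \<subseteq> {..<L}"
  proof (rule subsetI)
    fix s assume "s \<in> {s. Q s}"
    hence "1 \<le> g s" unfolding Qdef by simp
    have "s < L"
    proof (rule ccontr)
      assume "\<not> s < L" hence "g s = 0" using zg by simp
      thus False using \<open>1 \<le> g s\<close> by simp
    qed
    thus "s \<in> {..<L}" by simp
  qed
  have finQ: "finite {s. Q s}" using QL finite_subset by blast
  show "card {r. P r} = (if hsf g f then 1 else 0) + card {s. Q s}"
  proof (cases "hsf g f")
    case True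
    have hf: "f (Suc i) \<le> g i" "g i \<le> f i" for i using True unfolding hsf_def by auto
    have P0: "P 0" unfolding Pdef
    proof (intro conjI allI)
      fix i
      show "f (Suc i) + eu 0 (Suc i) \<le> f i + eu 0 i" using df'[of i] by (simp add: eu_def)
      show "f (Suc i) + eu 0 (Suc i) \<le> g i" using hf(1)[of i] by (simp add: eu_def)
      show "g i \<le> f i + eu 0 i" using hf(2)[of i] by simp
    qed
    have PS: "P (Suc s) \<longleftrightarrow> f (Suc s) < g s" for s
    proof
      assume "P (Suc s)"
      hence "f (Suc s) + eu (Suc s) (Suc s) \<le> g s" unfolding Pdef by blast
      thus "f (Suc s) < g s" by (simp add: eu_def)
    next
      assume lt: "f (Suc s) < g s"
      show "P (Suc s)" unfolding Pdef
      proof (intro conjI allI)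
        fix i
        show "f (Suc i) + eu (Suc s) (Suc i) \<le> f i + eu (Suc s) i"
          using df'[of i] lt hf(2)[of s] by (cases "i = s") (auto simp: eu_def)
        show "f (Suc i) + eu (Suc s) (Suc i) \<le> g i"
          using hf(1)[of i] lt by (cases "i = s") (auto simp: eu_def)
        show "g i \<le> f i + eu (Suc s) i" using hf(2)[of i] by simp
      qed
    qed
    have QS: "Q s \<longleftrightarrow> f (Suc s) < g s" for s
    proof
      assume q: "Q s"
      hence "f (Suc s) \<le> g s - eu s s" "1 \<le> g s" unfolding Qdef by blast+
      thus "f (Suc s) < g s" by (simp add: eu_def)
    next
      assume lt: "f (Suc s) < g s"
      show "Q s" unfolding Qdef
      proof (intro conjI allI)
        show "1 \<le> g s" using lt by simp
        fix i
        show "g (Suc i) - eu s (Suc i) \<le> g i - eu s i"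
          using dg'[of i] lt hf(2)[of "Suc s"] by (cases "i = s") (auto simp: eu_def)
        show "f (Suc i) \<le> g i - eu s i" using hf(1)[of i] lt by (cases "i = s") (auto simp: eu_def)
        show "g i - eu s i \<le> f i" using hf(2)[of i] by simp
      qed
    qed
    have "{r. P r} = insert 0 (Suc ` {s. Q s})"
    proof (rule set_eqI)
      fix r show "(r \<in> {r. P r}) = (r \<in> insert 0 (Suc ` {s. Q s}))"
        using P0 PS QS by (cases r) auto
    qed
    hence "card {r. P r} = Suc (card (Suc ` {s. Q s}))"
      using finQ by simp
    also have "\<dots> = Suc (card {s. Q s})" by (simp add: card_image)
    finally show ?thesis using True by simp
  next
    case False
    have PQ: "P r \<longleftrightarrow> Q r" for r
    proof
      assume pr: "P r"
      have a1: "f (Suc i) + eu r (Suc i) \<le> g i" "g i \<le> f i + eu r i" for i using pr unfolding Pdef by blast+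
      have a0: "f (Suc i) + eu r (Suc i) \<le> f i + eu r i" for i using pr unfolding Pdef by blast
      obtain j where "\<not> (f (Suc j) \<le> g j \<and> g j \<le> f j)" using False unfolding hsf_def by blast
      moreover have "f (Suc j) \<le> g j" using a1(1)[of j] by simp
      ultimately have "f j < g j" by simp
      hence jr: "j = r" using a1(2)[of j] by (auto simp: eu_def split: if_splits)
      hence gr: "g r = f r + 1" using a1(2)[of r] \<open>f j < g j\<close> by (simp add: eu_def)
      show "Q r" unfolding Qdef
      proof (intro conjI allI)
        show "1 \<le> g r" using gr by simp
        fix i
        show "g (Suc i) - eu r (Suc i) \<le> g i - eu r i"
        proof (cases "i = r")
          case True
          have "g (Suc r) \<le> f (Suc r)" using a1(2)[of "Suc r"] by (simp add: eu_def)
          thus ?thesis using True gr df'[of r] by (simp add: eu_def)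
        next
          case False
          thus ?thesis using dg'[of i] by (auto simp: eu_def)
        qed
        show "f (Suc i) \<le> g i - eu r i"
          using a1(1)[of i] gr df'[of r] by (cases "i = r") (auto simp: eu_def)
        show "g i - eu r i \<le> f i" using a1(2)[of i] by (cases "i = r") (auto simp: eu_def)
      qed
    next
      assume qr: "Q r"
      have b1: "f (Suc i) \<le> g i - eu r i" "g i - eu r i \<le> f i" for i using qr unfolding Qdef by blast+
      have g1: "1 \<le> g r" using qr unfolding Qdef by blast
      obtain j where "\<not> (f (Suc j) \<le> g j \<and> g j \<le> f j)" using False unfolding hsf_def by blast
      moreover have "f (Suc j) \<le> g j" using b1(1)[of j] by simp
      ultimately have "f j < g j" by simp
      hence jr: "j = r" using b1(2)[of j] by (auto simp: eu_def split: if_splits)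
      hence gr: "g r = f r + 1" using b1(2)[of r] \<open>f j < g j\<close> g1 by (simp add: eu_def)
      have gfo: "i \<noteq> r \<Longrightarrow> g i \<le> f i" for i using b1(2)[of i] by (simp add: eu_def)
      show "P r" unfolding Pdef
      proof (intro conjI allI)
        fix i
        show "f (Suc i) + eu r (Suc i) \<le> f i + eu r i"
        proof (cases "Suc i = r")
          case True
          have "g r \<le> g i" using dg'[of i] True by simp
          moreover have "g i \<le> f i" using gfo[of i] True by simp
          ultimately show ?thesis using gr True by (simp add: eu_def)
        next
          case False
          thus ?thesis using df'[of i] by (auto simp: eu_def)
        qed
        show "f (Suc i) + eu r (Suc i) \<le> g i"
        proof (cases "Suc i = r")
          case True
          thus ?thesis using gr dg'[of i] by (simp add: eu_def)
        next
          case False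
          thus ?thesis using b1(1)[of i] by (auto simp: eu_def)
        qed
        show "g i \<le> f i + eu r i" using gfo[of i] gr by (cases "i = r") (auto simp: eu_def)
      qed
    qed
    hence "{r. P r} = {s. Q s}" by blast
    thus ?thesis using False by simp
  qed
qed



definition covers :: "nat list \<Rightarrow> nat list set" where
  "covers mu = {la \<in> Parts (Suc (sum_list mu)). hs mu la}"

lemma sum_swap_gen:
  assumes "finite A" "finite B" "\<forall>x\<in>A. C x \<subseteq> B"
  shows "(\<Sum>x\<in>A. \<Sum>y\<in>C x. k x y) = (\<Sum>y\<in>B. \<Sum>x\<in>{x\<in>A. y \<in> C x}. (k x y :: 'c::comm_monoid_add))"
proof -
  have "(\<Sum>x\<in>A. \<Sum>y\<in>C x. k x y) = (\<Sum>x\<in>A. \<Sum>y\<in>B. if y \<in> C x then k x y else 0)"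
  proof (rule sum.cong[OF refl])
    fix x assume "x \<in> A"
    hence "C x \<subseteq> B" using assms(3) by blast
    hence "C x = B \<inter> C x" by blast
    hence "(\<Sum>y\<in>C x. k x y) = (\<Sum>y\<in>B \<inter> C x. k x y)" by simp
    also have "\<dots> = (\<Sum>y\<in>B. if y \<in> C x then k x y else 0)"
      by (rule sum.inter_restrict[OF assms(2)])
    finally show "(\<Sum>y\<in>C x. k x y) = (\<Sum>y\<in>B. if y \<in> C x then k x y else 0)" .
  qed
  also have "\<dots> = (\<Sum>y\<in>B. \<Sum>x\<in>A. if y \<in> C x then k x y else 0)" by (rule sum.swap)
  also have "\<dots> = (\<Sum>y\<in>B. \<Sum>x\<in>{x\<in>A. y \<in> C x}. k x y)"
    by (rule sum.cong[OF refl]) (simp add: sum.inter_filter[OF assms(1)])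
  finally show ?thesis .
qed

lemma sum_swap_count:
  assumes "finite A" "finite B" "\<forall>x\<in>A. C x \<subseteq> B"
  shows "(\<Sum>x\<in>A. \<Sum>y\<in>C x. h y) = (\<Sum>y\<in>B. card {x\<in>A. y \<in> C x} * (h y :: nat))"
  using sum_swap_gen[OF assms, of "\<lambda>x y. h y"] by simp

lemma sum1:
  assumes "finite A" "sum d A = (1::nat)"
  shows "\<exists>r\<in>A. d r = 1 \<and> (\<forall>i\<in>A. i \<noteq> r \<longrightarrow> d i = 0)"
proof -
  have "\<exists>r\<in>A. d r \<noteq> 0"
  proof (rule ccontr)
    assume "\<not> (\<exists>r\<in>A. d r \<noteq> 0)"
    hence "sum d A = 0" by simp
    thus False using assms(2) by simp
  qed
  then obtain r where r: "r \<in> A" "d r \<noteq> 0" by blast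
  have "sum d A = d r + sum d (A - {r})" using sum.remove[OF assms(1) r(1)] .
  hence "d r = 1" "sum d (A - {r}) = 0" using assms(2) r(2) by linarith+
  moreover have "\<forall>i\<in>A. i \<noteq> r \<longrightarrow> d i = 0"
    using \<open>sum d (A - {r}) = 0\<close> assms(1) by simp
  ultimately show ?thesis using r(1) by blast
qed

lemma hs_le: "hs x y \<Longrightarrow> pt x i \<le> pt y i"
  unfolding hs_def hsf_def by blast

lemma hs_cover:
  assumes x: "is_partition p x" and y: "is_partition (Suc p) y" and h: "hs x y"
  shows "\<exists>r. pt y = (\<lambda>i. pt x i + eu r i)"
proof -
  define N where "N = length x + length y"
  have sx: "(\<Sum>i<N. pt x i) = p" using sum_list_pt[of x N] part_sum[OF x] N_def by simp
  have sy: "(\<Sum>i<N. pt y i) = Suc p" using sum_list_pt[of y N] part_sum[OF y] N_def by simp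
  have "(\<Sum>i<N. pt y i - pt x i) = (\<Sum>i<N. pt y i) - (\<Sum>i<N. pt x i)"
    by (rule sum_subtractf_nat) (use hs_le[OF h] in blast)
  hence "(\<Sum>i<N. pt y i - pt x i) = 1" using sx sy by simp
  from sum1[OF _ this] obtain r where r: "r < N" "pt y r - pt x r = 1"
    "\<forall>i<N. i \<noteq> r \<longrightarrow> pt y i - pt x i = 0" by auto
  have "pt y i = pt x i + eu r i" for i
  proof (cases "i < N")
    case True
    thus ?thesis using r hs_le[OF h, of i] by (cases "i = r") (auto simp: eu_def)
  next
    case False
    hence "pt y i = 0" "pt x i = 0" "i \<noteq> r" using r(1) by (auto simp: pt_def N_def)
    thus ?thesis by (simp add: eu_def)
  qed
  thus ?thesis by blast
qed

lemma sum_eu: "r < N \<Longrightarrow> (\<Sum>i<N. f i + eu r i) = (\<Sum>i<N. f i) + 1"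
  by (simp add: sum.distrib eu_def)

lemma card_up:
  assumes mu: "is_partition n mu" and ka: "is_partition k ka"
  shows "card {la \<in> covers mu. hs ka la} =
     card {r. decr (\<lambda>i. pt mu i + eu r i) \<and> hsf (pt ka) (\<lambda>i. pt mu i + eu r i)}"
    (is "card ?S = card {r. ?P r}")
proof -
  define L where "L = length mu + length ka"
  define fe where "fe r = (\<lambda>i. pt mu i + eu r i)" for r
  have zf: "\<forall>i\<ge>L. pt mu i = 0" and zg: "\<forall>i\<ge>L. pt ka i = 0" by (auto simp: L_def pt_def)
  note sc = shape_count[OF part_decr[OF mu] part_decr[OF ka] zf zg]
  have rL: "?P r \<Longrightarrow> r \<le> L" for r using sc(1) by auto
  have rmu: "?P r \<Longrightarrow> r \<le> length mu" for r
  proof -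
    assume pr: "?P r"
    show "r \<le> length mu"
    proof (cases r)
      case (Suc r')
      have "pt mu (Suc r') + eu r (Suc r') \<le> pt mu r' + eu r r'" using pr unfolding decr_def by blast
      hence "0 < pt mu r'" using Suc by (simp add: eu_def)
      hence "r' < length mu" using part_pt_pos[OF mu] by simp
      thus ?thesis using Suc by simp
    qed simp
  qed
  define M where "M r = mk (fe r) (Suc L)" for r
  have Mprops: "pt (M r) = fe r \<and> is_partition (Suc n) (M r) \<and> hs mu (M r) \<and> hs ka (M r)" if pr: "?P r" for r
  proof -
    have d: "decr (fe r)" using pr fe_def by simp
    have z: "\<forall>i\<ge>Suc L. fe r i = 0" using zf rL[OF pr] by (auto simp: fe_def eu_def)
    note mp = mk_props[OF d z]
    have "(\<Sum>i<Suc L. fe r i) = Suc n"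
      unfolding fe_def using sum_eu[of r "Suc L" "pt mu"] rL[OF pr] sum_list_pt[of mu "Suc L"] part_sum[OF mu]
      by (simp add: L_def)
    hence p: "is_partition (Suc n) (M r)" using mp(2) M_def by simp
    have "hsf (pt mu) (fe r)" unfolding hsf_def
    proof
      fix i
      have "fe r (Suc i) \<le> pt mu i"
      proof (cases "Suc i = r")
        case True
        have "fe r (Suc i) \<le> fe r i" using d unfolding decr_def by blast
        thus ?thesis using True by (simp add: fe_def eu_def)
      next
        case False
        thus ?thesis using part_decr[OF mu] by (simp add: fe_def eu_def decr_def)
      qed
      thus "fe r (Suc i) \<le> pt mu i \<and> pt mu i \<le> fe r i" by (simp add: fe_def)
    qed
    thus ?thesis using mp(1) p pr unfolding hs_def M_def fe_def by simp
  qed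
  have inj: "inj_on M {r. ?P r}"
  proof (rule inj_onI)
    fix r r' assume "r \<in> {r. ?P r}" "r' \<in> {r. ?P r}" "M r = M r'"
    moreover have "pt (M r) = fe r" "pt (M r') = fe r'" using Mprops \<open>r \<in> _\<close> \<open>r' \<in> _\<close> by simp_all
    ultimately have "fe r = fe r'" by simp
    hence "fe r r = fe r' r" by simp
    thus "r = r'" by (simp add: fe_def eu_def split: if_splits)
  qed
  have img: "M ` {r. ?P r} = ?S"
  proof
    show "M ` {r. ?P r} \<subseteq> ?S"
    proof (rule subsetI)
      fix la assume "la \<in> M ` {r. ?P r}"
      then obtain r where "?P r" "la = M r" by blast
      hence "is_partition (Suc n) la" "hs mu la" "hs ka la" using Mprops by simp_all
      thus "la \<in> ?S" using part_sum[OF mu] by (simp add: covers_def Parts_def)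
    qed
  next
    show "?S \<subseteq> M ` {r. ?P r}"
    proof (rule subsetI)
      fix la assume "la \<in> ?S"
      hence la: "is_partition (Suc n) la" "hs mu la" "hs ka la"
        using part_sum[OF mu] by (auto simp: covers_def Parts_def)
      obtain r where r: "pt la = fe r" using hs_cover[OF mu la(1) la(2)] fe_def by auto
      have pr: "?P r" using part_decr[OF la(1)] la(3) r unfolding hs_def fe_def by simp
      have "length la \<le> Suc L"
      proof (rule ccontr)
        assume "\<not> length la \<le> Suc L"
        hence "0 < pt la (Suc L)" using part_pt_pos[OF la(1)] by simp
        moreover have "fe r (Suc L) = 0" using zf rL[OF pr] by (simp add: fe_def eu_def)
        ultimately show False using r by simp
      qed
      hence "la = mk (pt la) (Suc L)" using mk_pt[OF la(1)] by simp
      hence "la = M r" using r M_def by simp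
      thus "la \<in> M ` {r. ?P r}" using pr by blast
    qed
  qed
  show ?thesis using card_image[OF inj] img by simp
qed



lemma sum_eu_minus: "r < N \<Longrightarrow> 1 \<le> f r \<Longrightarrow> (\<Sum>i<N. f i - eu r i) = (\<Sum>i<N. f i) - 1"
proof -
  assume r: "r < N" "1 \<le> f r"
  have "(\<Sum>i<N. f i - eu r i) = (\<Sum>i<N. f i) - (\<Sum>i<N. eu r i)"
    by (rule sum_subtractf_nat) (use r in \<open>auto simp: eu_def\<close>)
  moreover have "(\<Sum>i<N. eu r i) = 1" using r(1) by (simp add: eu_def)
  ultimately show ?thesis by simp
qed

lemma card_down:
  assumes mu: "is_partition n mu" and ka: "is_partition (Suc n - a) ka" and a: "a \<le> Suc n"
  shows "card {nu \<in> HS mu a. ka \<in> covers nu} =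
    card {s. 1 \<le> pt ka s \<and> decr (\<lambda>i. pt ka i - eu s i) \<and> hsf (\<lambda>i. pt ka i - eu s i) (pt mu)}"
    (is "card ?S = card {s. ?Q s}")
proof -
  define L where "L = length mu + length ka"
  define fm where "fm s = (\<lambda>i. pt ka i - eu s i)" for s
  define M where "M s = mk (fm s) L" for s
  have sumka: "(\<Sum>i<L. pt ka i) = Suc n - a" using sum_list_pt[of ka L] part_sum[OF ka] L_def by simp
  have sumu: "sum_list mu = n" using part_sum[OF mu] .
  have sL: "?Q s \<Longrightarrow> s < length ka" for s using part_pt_pos[OF ka, of s] by simp
  have Mprops: "pt (M s) = fm s \<and> is_partition (n - a) (M s) \<and> a \<le> n \<and> hs (M s) mu \<and> hs (M s) ka"
    if q: "?Q s" for s
  proof -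
    have d: "decr (fm s)" using q fm_def by simp
    have sl: "s < L" using sL[OF q] L_def by simp
    have z: "\<forall>i\<ge>L. fm s i = 0" using sl by (auto simp: fm_def eu_def pt_def L_def)
    note mp = mk_props[OF d z]
    have "1 \<le> (\<Sum>i<L. pt ka i)"
      using q member_le_sum[of s "{..<L}" "pt ka"] sl by simp
    hence an: "a \<le> n" using sumka by simp
    have "(\<Sum>i<L. fm s i) = n - a"
      unfolding fm_def using sum_eu_minus[of s L "pt ka"] sl q sumka an by simp
    hence p: "is_partition (n - a) (M s)" using mp(2) M_def by simp
    have "hsf (fm s) (pt ka)" unfolding hsf_def
    proof
      fix i
      have "pt ka (Suc i) \<le> fm s i"
      proof (cases "i = s")
        case True
        have "fm s (Suc i) \<le> fm s i" using d unfolding decr_def by blast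
        thus ?thesis using True by (simp add: fm_def eu_def)
      next
        case False
        thus ?thesis using part_decr[OF ka] by (simp add: fm_def eu_def decr_def)
      qed
      thus "pt ka (Suc i) \<le> fm s i \<and> fm s i \<le> pt ka i" by (simp add: fm_def)
    qed
    thus ?thesis using mp(1) p q an unfolding hs_def M_def fm_def by simp
  qed
  have inj: "inj_on M {s. ?Q s}"
  proof (rule inj_onI)
    fix s s' assume h: "s \<in> {s. ?Q s}" "s' \<in> {s. ?Q s}" "M s = M s'"
    moreover have "pt (M s) = fm s" "pt (M s') = fm s'" using Mprops h(1,2) by simp_all
    ultimately have "fm s = fm s'" by simp
    hence "fm s s = fm s' s" by simp
    thus "s = s'" using h(1) by (simp add: fm_def eu_def split: if_splits)
  qed
  have img: "M ` {s. ?Q s} = ?S"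
  proof
    show "M ` {s. ?Q s} \<subseteq> ?S"
    proof (rule subsetI)
      fix nu assume "nu \<in> M ` {s. ?Q s}"
      then obtain s where q: "?Q s" and nd: "nu = M s" by blast
      hence nu: "is_partition (n - a) nu" "a \<le> n" "hs nu mu" "hs nu ka" using Mprops by simp_all
      have "sum_list nu = n - a" using part_sum[OF nu(1)] .
      hence "Suc (sum_list nu) = Suc n - a" using nu(2) by simp
      hence "ka \<in> covers nu" using ka nu(4) by (simp add: covers_def Parts_def)
      moreover have "nu \<in> HS mu a" using nu sumu by (simp add: HS_def Parts_def)
      ultimately show "nu \<in> ?S" by simp
    qed
  next
    show "?S \<subseteq> M ` {s. ?Q s}"
    proof (rule subsetI)
      fix nu assume "nu \<in> ?S"
      hence h1: "nu \<in> HS mu a" and h2: "ka \<in> covers nu" by auto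
      have nu: "is_partition (n - a) nu" "hs nu mu" using h1 sumu by (auto simp: HS_def Parts_def)
      have "is_partition (Suc (sum_list nu)) ka" "hs nu ka" using h2 by (auto simp: covers_def Parts_def)
      hence kp: "is_partition (Suc (n - a)) ka" using part_sum[OF nu(1)] by simp
      obtain s where s: "pt ka = (\<lambda>i. pt nu i + eu s i)" using hs_cover[OF nu(1) kp \<open>hs nu ka\<close>] by blast
      have ks: "pt ka s = pt nu s + 1" using fun_cong[OF s, of s] by (simp add: eu_def)
      have ptnu: "pt nu = fm s"
      proof (rule ext)
        fix i show "pt nu i = fm s i" using fun_cong[OF s, of i] by (simp add: fm_def)
      qed
      have d: "decr (fm s)" using part_decr[OF nu(1)] ptnu by simp
      have hh: "hsf (fm s) (pt mu)" using nu(2) ptnu by (simp add: hs_def)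
      have q: "?Q s" using ks d hh unfolding fm_def by simp
      have "length nu \<le> L"
      proof (rule ccontr)
        assume "\<not> length nu \<le> L"
        hence "0 < pt nu (length ka)" using part_pt_pos[OF nu(1)] L_def by simp
        moreover have "pt nu (length ka) \<le> pt ka (length ka)" using s by simp
        ultimately show False by (simp add: pt_def)
      qed
      hence "nu = mk (pt nu) L" using mk_pt[OF nu(1)] by simp
      hence "nu = M s" using ptnu M_def by simp
      thus "nu \<in> M ` {s. ?Q s}" using q by blast
    qed
  qed
  show ?thesis using card_image[OF inj] img by simp
qed

lemma hsf_sum_le:
  assumes "hsf g f" shows "(\<Sum>i<L. g i) \<le> (\<Sum>i<L. f i)"
  using assms unfolding hsf_def by (intro sum_mono) blast

lemma shape_main:
  assumes mu: "is_partition n mu" and ka: "is_partition (Suc n - a) ka" and a: "a \<le> Suc n"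
  shows "card {la \<in> covers mu. ka \<in> HS la a} =
    (if 1 \<le> a \<and> ka \<in> HS mu (a - 1) then 1 else 0) + card {nu \<in> HS mu a. ka \<in> covers nu}"
proof -
  define L where "L = length mu + length ka"
  have zf: "\<forall>i\<ge>L. pt mu i = 0" and zg: "\<forall>i\<ge>L. pt ka i = 0" by (auto simp: L_def pt_def)
  note sc = shape_count[OF part_decr[OF mu] part_decr[OF ka] zf zg]
  have e1: "{la \<in> covers mu. ka \<in> HS la a} = {la \<in> covers mu. hs ka la}"
  proof (rule set_eqI)
    fix la
    show "(la \<in> {la \<in> covers mu. ka \<in> HS la a}) = (la \<in> {la \<in> covers mu. hs ka la})"
    proof (cases "la \<in> covers mu")
      case True
      hence "sum_list la = Suc n" using part_sum[OF mu] by (auto simp: covers_def Parts_def is_partition_def)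
      thus ?thesis using ka a by (simp add: HS_def Parts_def)
    qed simp
  qed
  have e2: "(1 \<le> a \<and> ka \<in> HS mu (a - 1)) = hsf (pt ka) (pt mu)"
  proof
    assume "1 \<le> a \<and> ka \<in> HS mu (a - 1)"
    thus "hsf (pt ka) (pt mu)" by (simp add: HS_def hs_def)
  next
    assume h: "hsf (pt ka) (pt mu)"
    have "(\<Sum>i<L. pt ka i) \<le> (\<Sum>i<L. pt mu i)" by (rule hsf_sum_le[OF h])
    hence "Suc n - a \<le> n" using sum_list_pt[of ka L] sum_list_pt[of mu L] part_sum[OF ka] part_sum[OF mu]
      L_def by simp
    hence a1: "1 \<le> a" by simp
    hence "n - (a - 1) = Suc n - a" using a by simp
    thus "1 \<le> a \<and> ka \<in> HS mu (a - 1)" using a1 h ka part_sum[OF mu] a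
      by (simp add: HS_def hs_def Parts_def)
  qed
  show ?thesis
    unfolding e1 e2 card_up[OF mu ka] card_down[OF mu ka a] using sc(3) by simp
qed

lemma finite_covers: "finite (covers mu)"
  unfolding covers_def using finite_Parts by (rule finite_subset[rotated]) auto

lemma finite_HS: "finite (HS la a)"
  unfolding HS_def using finite_Parts by (rule finite_subset[rotated]) auto

lemma shape_sum:
  assumes mu: "is_partition n mu"
  shows "(\<Sum>la\<in>covers mu. \<Sum>ka\<in>HS la a. h ka) =
    (if 1 \<le> a then (\<Sum>nu\<in>HS mu (a - 1). h nu) else 0) + (\<Sum>nu\<in>HS mu a. \<Sum>ka\<in>covers nu. (h ka :: nat))"
proof (cases "a \<le> Suc n")
  case False
  have "HS la a = {}" if "la \<in> covers mu" for la
    using that False part_sum[OF mu] by (auto simp: covers_def HS_def Parts_def is_partition_def)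
  moreover have "HS mu (a - 1) = {}" "HS mu a = {}" using False part_sum[OF mu] by (auto simp: HS_def)
  ultimately show ?thesis by simp
next
  case True
  define B where "B = Parts (Suc n - a)"
  have fB: "finite B" using finite_Parts B_def by simp
  have s1: "(\<Sum>la\<in>covers mu. \<Sum>ka\<in>HS la a. h ka) = (\<Sum>ka\<in>B. card {la\<in>covers mu. ka \<in> HS la a} * h ka)"
  proof (rule sum_swap_count[OF finite_covers fB])
    show "\<forall>x\<in>covers mu. HS x a \<subseteq> B"
      using part_sum[OF mu] by (auto simp: covers_def HS_def Parts_def B_def is_partition_def)
  qed
  have s2: "(\<Sum>nu\<in>HS mu a. \<Sum>ka\<in>covers nu. h ka) = (\<Sum>ka\<in>B. card {nu\<in>HS mu a. ka \<in> covers nu} * h ka)"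
  proof (rule sum_swap_count[OF finite_HS fB])
    show "\<forall>x\<in>HS mu a. covers x \<subseteq> B"
    proof
      fix nu assume "nu \<in> HS mu a"
      hence "sum_list nu = n - a" "a \<le> n" using part_sum[OF mu]
        by (auto simp: HS_def Parts_def is_partition_def)
      hence "Suc (sum_list nu) = Suc n - a" by simp
      thus "covers nu \<subseteq> B" by (auto simp: covers_def B_def)
    qed
  qed
  have s3: "(if 1 \<le> a then (\<Sum>nu\<in>HS mu (a - 1). h nu) else 0) =
      (\<Sum>ka\<in>B. (if 1 \<le> a \<and> ka \<in> HS mu (a - 1) then 1 else 0) * h ka)"
  proof (cases "1 \<le> a")
    case True
    have sub: "HS mu (a - 1) \<subseteq> B" using True part_sum[OF mu] by (auto simp: HS_def B_def)
    hence "HS mu (a - 1) = B \<inter> HS mu (a - 1)" by blast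
    hence "(\<Sum>nu\<in>HS mu (a - 1). h nu) = (\<Sum>nu\<in>B \<inter> HS mu (a - 1). h nu)" by simp
    also have "\<dots> = (\<Sum>ka\<in>B. if ka \<in> HS mu (a - 1) then h ka else 0)" by (rule sum.inter_restrict[OF fB])
    also have "\<dots> = (\<Sum>ka\<in>B. (if 1 \<le> a \<and> ka \<in> HS mu (a - 1) then 1 else 0) * h ka)"
      using True by (intro sum.cong) auto
    finally show ?thesis using True by simp
  qed simp
  have "(\<Sum>la\<in>covers mu. \<Sum>ka\<in>HS la a. h ka) =
      (\<Sum>ka\<in>B. (if 1 \<le> a \<and> ka \<in> HS mu (a - 1) then 1 else 0) * h ka + card {nu\<in>HS mu a. ka \<in> covers nu} * h ka)"
    unfolding s1
  proof (rule sum.cong[OF refl])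
    fix ka assume "ka \<in> B"
    hence "is_partition (Suc n - a) ka" by (simp add: B_def Parts_def)
    from shape_main[OF mu this True]
    show "card {la\<in>covers mu. ka \<in> HS la a} * h ka =
      (if 1 \<le> a \<and> ka \<in> HS mu (a - 1) then 1 else 0) * h ka + card {nu\<in>HS mu a. ka \<in> covers nu} * h ka"
      by (simp add: algebra_simps)
  qed
  also have "\<dots> = (if 1 \<le> a then (\<Sum>nu\<in>HS mu (a - 1). h nu) else 0) + (\<Sum>nu\<in>HS mu a. \<Sum>ka\<in>covers nu. h ka)"
    unfolding s2 s3 by (rule sum.distrib)
  finally show ?thesis .
qed



lemma covers_ne: "la \<in> covers mu \<Longrightarrow> la \<noteq> []"
  by (auto simp: covers_def Parts_def is_partition_def)

lemma covers_part: "la \<in> covers mu \<Longrightarrow> is_partition (Suc (sum_list mu)) la"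
  by (auto simp: covers_def Parts_def)

lemma pieri:
  assumes "\<forall>k\<ge>m. \<alpha> k = 0" "is_partition n mu"
  shows "(\<Sum>j<m. if 1 \<le> \<alpha> j then K mu (\<alpha>(j := \<alpha> j - 1)) else 0) = (\<Sum>la\<in>covers mu. K la \<alpha>)"
  using assms
proof (induction m arbitrary: \<alpha> mu n)
  case 0
  hence az: "\<alpha> = (\<lambda>_. 0)" by auto
  have "K la \<alpha> = 0" if "la \<in> covers mu" for la
    using K_zero[OF covers_part[OF that]] covers_ne[OF that] az by simp
  thus ?case by simp
next
  case (Suc m)
  note mu = Suc.prems(2)
  define a where "a = \<alpha> m"
  define \<alpha>' where "\<alpha>' = \<alpha>(m := 0)"
  have sup: "\<forall>k>m. \<alpha> k = 0" using Suc.prems(1) by auto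
  have sup': "\<forall>k\<ge>m. \<alpha>' k = 0" using sup by (auto simp: \<alpha>'_def)
  have smu: "sum_list mu = n" using part_sum[OF mu] .
  have j_term: "K mu (\<alpha>(j := \<alpha> j - 1)) = (\<Sum>nu\<in>HS mu a. K nu (\<alpha>'(j := \<alpha>' j - 1)))" if j: "j < m" for j
  proof -
    have s: "\<forall>k>m. (\<alpha>(j := \<alpha> j - 1)) k = 0" using sup j by auto
    have e1: "(\<alpha>(j := \<alpha> j - 1)) m = a" using j by (simp add: a_def)
    have e2: "(\<alpha>(j := \<alpha> j - 1))(m := 0) = \<alpha>'(j := \<alpha>' j - 1)" using j
      by (auto simp: \<alpha>'_def fun_upd_twist)
    show ?thesis using branch[OF mu s] unfolding e1 e2 .
  qed
  have "(\<Sum>j<m. if 1 \<le> \<alpha> j then K mu (\<alpha>(j := \<alpha> j - 1)) else 0) =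
      (\<Sum>j<m. \<Sum>nu\<in>HS mu a. if 1 \<le> \<alpha>' j then K nu (\<alpha>'(j := \<alpha>' j - 1)) else 0)"
  proof (rule sum.cong[OF refl])
    fix j assume "j \<in> {..<m}"
    hence j: "j < m" by simp
    hence "\<alpha>' j = \<alpha> j" by (simp add: \<alpha>'_def)
    thus "(if 1 \<le> \<alpha> j then K mu (\<alpha>(j := \<alpha> j - 1)) else 0) =
      (\<Sum>nu\<in>HS mu a. if 1 \<le> \<alpha>' j then K nu (\<alpha>'(j := \<alpha>' j - 1)) else 0)"
      using j_term[OF j] by simp
  qed
  also have "\<dots> = (\<Sum>nu\<in>HS mu a. \<Sum>j<m. if 1 \<le> \<alpha>' j then K nu (\<alpha>'(j := \<alpha>' j - 1)) else 0)"
    by (rule sum.swap)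
  also have "\<dots> = (\<Sum>nu\<in>HS mu a. \<Sum>ka\<in>covers nu. K ka \<alpha>')"
  proof (rule sum.cong[OF refl])
    fix nu assume "nu \<in> HS mu a"
    hence "is_partition (n - a) nu" using smu by (simp add: HS_def Parts_def)
    from Suc.IH[OF sup' this]
    show "(\<Sum>j<m. if 1 \<le> \<alpha>' j then K nu (\<alpha>'(j := \<alpha>' j - 1)) else 0) = (\<Sum>ka\<in>covers nu. K ka \<alpha>')" .
  qed
  finally have A: "(\<Sum>j<m. if 1 \<le> \<alpha> j then K mu (\<alpha>(j := \<alpha> j - 1)) else 0) =
      (\<Sum>nu\<in>HS mu a. \<Sum>ka\<in>covers nu. K ka \<alpha>')" .
  have B: "(if 1 \<le> \<alpha> m then K mu (\<alpha>(m := \<alpha> m - 1)) else 0) =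
      (if 1 \<le> a then (\<Sum>nu\<in>HS mu (a - 1). K nu \<alpha>') else 0)"
  proof -
    have s: "\<forall>k>m. (\<alpha>(m := \<alpha> m - 1)) k = 0" using sup by auto
    have e1: "(\<alpha>(m := \<alpha> m - 1)) m = a - 1" by (simp add: a_def)
    have e2: "(\<alpha>(m := \<alpha> m - 1))(m := 0) = \<alpha>'" by (simp add: \<alpha>'_def)
    have X: "K mu (\<alpha>(m := \<alpha> m - 1)) = (\<Sum>nu\<in>HS mu (a - 1). K nu \<alpha>')"
      using branch[OF mu s] unfolding e1 e2 .
    show ?thesis unfolding X unfolding a_def by (rule refl)
  qed
  have C: "(\<Sum>la\<in>covers mu. K la \<alpha>) = (\<Sum>la\<in>covers mu. \<Sum>ka\<in>HS la a. K ka \<alpha>')"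
  proof (rule sum.cong[OF refl])
    fix la assume "la \<in> covers mu"
    from branch[OF covers_part[OF this] sup]
    show "K la \<alpha> = (\<Sum>ka\<in>HS la a. K ka \<alpha>')" unfolding a_def \<alpha>'_def .
  qed
  show ?case
    unfolding sum.lessThan_Suc A B C shape_sum[OF mu] by simp
qed



lemma pt_hook: "pt (hook n i) k = (if k = 0 then n - i else if k \<le> i then 1 else 0)"
  by (cases k) (auto simp: pt_def hook_def nth_Cons')

lemma hook_part: "i < n \<Longrightarrow> is_partition n (hook n i)"
proof -
  assume "i < n"
  have "sorted_wrt (\<ge>) (replicate i (1::nat))" by (simp add: sorted_wrt_iff_nth_less)
  thus ?thesis unfolding is_partition_def hook_def using \<open>i < n\<close> by (auto simp: sum_list_replicate)
qed

lemma pt_Nil: "pt [] k = 0" by (simp add: pt_def)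

lemma sum_hook: "sum_list (hook n i) = n - i + i"
  by (simp add: hook_def sum_list_replicate)

lemma length_hook: "length (hook n i) = Suc i" by (simp add: hook_def)

lemma hook_inj: "hook n i = hook n j \<Longrightarrow> i = j"
proof -
  assume "hook n i = hook n j"
  hence "length (hook n i) = length (hook n j)" by simp
  thus ?thesis by (simp add: length_hook)
qed

lemma sum_list_tail: "length la \<le> Suc N \<Longrightarrow> sum_list la = pt la 0 + (\<Sum>k<N. pt la (Suc k))"
proof -
  assume "length la \<le> Suc N"
  hence "sum_list la = (\<Sum>i<Suc N. pt la i)" by (rule sum_list_pt)
  also have "\<dots> = pt la 0 + (\<Sum>k<N. pt la (Suc k))" by (rule sum.lessThan_Suc_shift)
  finally show ?thesis .
qed

lemma tail_hook: "j \<le> N \<Longrightarrow> (\<Sum>k<N. pt (hook X j) (Suc k)) = j"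
proof -
  assume "j \<le> N"
  have "(\<Sum>k<N. pt (hook X j) (Suc k)) = (\<Sum>k<N. if k < j then 1 else 0)"
    by (rule sum.cong) (auto simp: pt_hook)
  also have "\<dots> = card {k. k < N \<and> k < j}" by (simp add: sum.If_cases Int_def)
  also have "{k. k < N \<and> k < j} = {..<j}" using \<open>j \<le> N\<close> by auto
  finally show ?thesis by simp
qed

lemma HS_hook:
  assumes i: "i < n" and a: "1 \<le> a"
  shows "HS (hook n i) a = (if i < n - a then {hook (n - a) i} else {})
      \<union> (if 1 \<le> i \<and> i - 1 < n - a then {hook (n - a) (i - 1)} else {})
      \<union> (if a = n \<and> i = 0 then {[]} else {})"
proof -
  have sh: "sum_list (hook n i) = n" using sum_hook[of n i] i by simp
  show ?thesis
  proof (rule set_eqI)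
    fix ka
    show "(ka \<in> HS (hook n i) a) = (ka \<in> (if i < n - a then {hook (n - a) i} else {})
      \<union> (if 1 \<le> i \<and> i - 1 < n - a then {hook (n - a) (i - 1)} else {})
      \<union> (if a = n \<and> i = 0 then {[]} else {}))" (is "?L = ?R")
    proof
      assume "?R"
      moreover have "hook (n - a) i \<in> HS (hook n i) a" if "i < n - a"
        using that hook_part[OF that] sh i a
        by (auto simp: HS_def Parts_def hs_def hsf_def pt_hook)
      moreover have "hook (n - a) (i - 1) \<in> HS (hook n i) a" if "1 \<le> i" "i - 1 < n - a"
        using that hook_part[OF that(2)] sh i a
        by (auto simp: HS_def Parts_def hs_def hsf_def pt_hook)
      moreover have "[] \<in> HS (hook n i) a" if "a = n" "i = 0"
        using that sh by (auto simp: HS_def Parts_def hs_def hsf_def pt_hook pt_Nil is_partition_def)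
      ultimately show "?L" by (auto split: if_splits)
    next
      assume "?L"
      hence kp: "is_partition (n - a) ka" and an: "a \<le> n" and h: "hsf (pt ka) (pt (hook n i))"
        using sh by (auto simp: HS_def Parts_def hs_def)
      have h1: "pt (hook n i) (Suc k) \<le> pt ka k" "pt ka k \<le> pt (hook n i) k" for k
        using h unfolding hsf_def by blast+
      define e where "e = pt ka i"
      define j where "j = (if i = 0 then 0 else if e = 1 then i else i - 1)"
      have ji: "j \<le> i" unfolding j_def by auto
      have tail: "pt ka (Suc k) = pt (hook X j) (Suc k)" for k X
      proof -
        have u: "pt ka (Suc k) \<le> (if Suc k \<le> i then 1 else 0)" using h1(2)[of "Suc k"] by (simp add: pt_hook)
        have l: "(if Suc (Suc k) \<le> i then 1 else 0) \<le> pt ka (Suc k)" using h1(1)[of "Suc k"] by (simp add: pt_hook)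
        show ?thesis
        proof (cases "Suc k < i")
          case True thus ?thesis using u l by (auto simp: pt_hook j_def e_def)
        next
          case False
          show ?thesis
          proof (cases "Suc k = i")
            case True
            hence "e \<le> 1" using u by (simp add: e_def)
            thus ?thesis using True by (auto simp: pt_hook j_def e_def)
          next
            case False
            hence "i < Suc k" using \<open>\<not> Suc k < i\<close> by simp
            thus ?thesis using u by (auto simp: pt_hook j_def)
          qed
        qed
      qed
      define N where "N = length ka + n"
      have "n - a = pt ka 0 + (\<Sum>k<N. pt ka (Suc k))"
        using sum_list_tail[of ka N] part_sum[OF kp] N_def by simp
      also have "(\<Sum>k<N. pt ka (Suc k)) = j"
        using tail[of _ 0] tail_hook[of j N 0] ji i N_def by simp
      finally have k0: "n - a = pt ka 0 + j" .
      have k0pos: "1 \<le> pt ka 0" if "1 \<le> i"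
        using h1(1)[of 0] that by (simp add: pt_hook)
      show "?R"
      proof (cases "n - a = j")
        case True
        hence "pt ka 0 = 0" using k0 by simp
        hence i0: "i = 0" using k0pos by (cases "i = 0") auto
        hence "j = 0" by (simp add: j_def)
        hence an': "a = n" using True an a by simp
        have "pt ka = pt []"
        proof (rule ext)
          fix k show "pt ka k = pt [] k"
            using \<open>pt ka 0 = 0\<close> tail[of "k - 1" 0] \<open>j = 0\<close> by (cases k) (auto simp: pt_hook pt_Nil)
        qed
        hence "ka = []" using part_inj[OF kp, of 0] by (simp add: is_partition_def)
        thus ?thesis using an' i0 by simp
      next
        case False
        hence jl: "j < n - a" using k0 by simp
        have hp: "is_partition (n - a) (hook (n - a) j)" by (rule hook_part[OF jl])
        have "pt ka = pt (hook (n - a) j)"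
        proof (rule ext)
          fix k show "pt ka k = pt (hook (n - a) j) k"
            using k0 tail[of "k - 1" "n - a"] by (cases k) (auto simp: pt_hook)
        qed
        hence kj: "ka = hook (n - a) j" using part_inj[OF kp hp] by simp
        show ?thesis
        proof (cases "i = 0")
          case True thus ?thesis using kj jl by (simp add: j_def)
        next
          case False
          thus ?thesis using kj jl by (auto simp: j_def split: if_splits)
        qed
      qed
    qed
  qed
qed



lemma K_Nil: "K [] \<beta> = (if \<beta> = (\<lambda>_. 0) then 1 else 0)"
proof -
  have "ssyt [] \<beta> = (if \<beta> = (\<lambda>_. 0) then {\<lambda>_. 0} else {})"
    unfolding ssyt_def cells_def by (auto simp: fun_eq_iff)
  thus ?thesis by (simp add: K_def)
qed

lemma sum_HS_hook:
  assumes i: "i < n" and a: "1 \<le> a"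
  shows "(\<Sum>ka\<in>HS (hook n i) a. h ka) =
    (if i < n - a then h (hook (n - a) i) else 0) + (if 1 \<le> i \<and> i - 1 < n - a then h (hook (n - a) (i - 1)) else 0)
    + (if a = n \<and> i = 0 then h [] else 0)"
proof -
  define S1 where "S1 = (if i < n - a then {hook (n - a) i} else {})"
  define S2 where "S2 = (if 1 \<le> i \<and> i - 1 < n - a then {hook (n - a) (i - 1)} else {})"
  define S3 where "S3 = (if a = n \<and> i = 0 then {[]} else ({}::nat list set))"
  have f: "finite S1" "finite S2" "finite S3" by (auto simp: S1_def S2_def S3_def)
  have d12: "S1 \<inter> S2 = {}"
  proof -
    have "hook (n - a) i \<noteq> hook (n - a) (i - 1)" if "1 \<le> i" using hook_inj that by fastforce
    thus ?thesis by (auto simp: S1_def S2_def)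
  qed
  have d3: "(S1 \<union> S2) \<inter> S3 = {}" by (auto simp: S1_def S2_def S3_def hook_def)
  have "(\<Sum>ka\<in>HS (hook n i) a. h ka) = (\<Sum>ka\<in>S1 \<union> S2 \<union> S3. h ka)"
    unfolding HS_hook[OF i a] S1_def S2_def S3_def ..
  also have "\<dots> = (\<Sum>ka\<in>S1 \<union> S2. h ka) + (\<Sum>ka\<in>S3. h ka)"
    by (rule sum.union_disjoint) (use f d3 in auto)
  also have "(\<Sum>ka\<in>S1 \<union> S2. h ka) = (\<Sum>ka\<in>S1. h ka) + (\<Sum>ka\<in>S2. h ka)"
    by (rule sum.union_disjoint) (use f d12 in auto)
  finally show ?thesis by (simp add: S1_def S2_def S3_def)
qed

lemma telescope:
  fixes X :: "nat \<Rightarrow> int"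
  assumes "b < n"
  shows "(\<Sum>i<n. (-1)^i * ((if i < b then X i else 0) + (if 1 \<le> i \<and> i - 1 < b then X (i - 1) else 0))) = 0"
proof -
  obtain n' where n: "n = Suc n'" using assms by (cases n) auto
  have b: "b \<le> n'" using assms n by simp
  have s1: "(\<Sum>i<n. (-1)^i * (if i < b then X i else 0)) = (\<Sum>i<b. (-1)^i * X i)"
  proof -
    have "(\<Sum>i<n. (-1)^i * (if i < b then X i else 0)) = (\<Sum>i<n. if i \<in> {i. i < b} then (-1)^i * X i else 0)"
      by (rule sum.cong) auto
    also have "\<dots> = (\<Sum>i\<in>{..<n} \<inter> {i. i < b}. (-1)^i * X i)"
      by (rule sum.inter_restrict[symmetric]) simp
    also have "{..<n} \<inter> {i. i < b} = {..<b}" using assms by auto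
    finally show ?thesis .
  qed
  have s2: "(\<Sum>i<n. (-1)^i * (if 1 \<le> i \<and> i - 1 < b then X (i - 1) else 0)) = - (\<Sum>i<b. (-1)^i * X i)"
  proof -
    have "(\<Sum>i<n. (-1)^i * (if 1 \<le> i \<and> i - 1 < b then X (i - 1) else 0))
        = (\<Sum>k<n'. (-1)^(Suc k) * (if k < b then X k else 0))"
    proof -
      have "(\<Sum>i<n. (-1)^i * (if 1 \<le> i \<and> i - 1 < b then X (i - 1) else 0))
        = (-1)^0 * (if 1 \<le> (0::nat) \<and> 0 - 1 < b then X (0 - 1) else 0) +
          (\<Sum>k<n'. (-1)^(Suc k) * (if 1 \<le> Suc k \<and> Suc k - 1 < b then X (Suc k - 1) else 0))"
        unfolding n by (rule sum.lessThan_Suc_shift)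
      also have "(\<Sum>k<n'. (-1)^(Suc k) * (if 1 \<le> Suc k \<and> Suc k - 1 < b then X (Suc k - 1) else 0))
          = (\<Sum>k<n'. (-1)^(Suc k) * (if k < b then X k else 0))"
        by (rule sum.cong[OF refl]) simp
      finally show ?thesis by simp
    qed
    also have "\<dots> = - (\<Sum>k<n'. (-1)^k * (if k < b then X k else 0))"
      by (simp add: sum_negf[symmetric])
    also have "(\<Sum>k<n'. (-1)^k * (if k < b then X k else 0)) = (\<Sum>i<n'. if i \<in> {i. i < b} then (-1)^i * X i else 0)"
      by (rule sum.cong) auto
    also have "\<dots> = (\<Sum>i\<in>{..<n'} \<inter> {i. i < b}. (-1)^i * X i)"
      by (rule sum.inter_restrict[symmetric]) simp
    also have "{..<n'} \<inter> {i. i < b} = {..<b}" using b by auto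
    finally show ?thesis .
  qed
  show ?thesis using s1 s2 by (simp add: distrib_left sum.distrib)
qed

lemma pn_expand:
  assumes n: "1 \<le> n"
  shows "power_sum n \<alpha> = (\<Sum>i<n. (-1)^i * int (K (hook n i) \<alpha>))"
proof (cases "finite {k. \<alpha> k \<noteq> 0}")
  case False
  have "\<not> (\<exists>j. \<alpha> = (\<lambda>i. if i = j then n else 0))"
  proof
    assume "\<exists>j. \<alpha> = (\<lambda>i. if i = j then n else 0)"
    then obtain j where "\<alpha> = (\<lambda>i. if i = j then n else 0)" by blast
    hence "{k. \<alpha> k \<noteq> 0} \<subseteq> {j}" by auto
    thus False using False finite_subset by blast
  qed
  thus ?thesis using K_inf[OF False] by (simp add: power_sum_def)
next
  case True
  define S where "S = {k. \<alpha> k \<noteq> 0}"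
  show ?thesis
  proof (cases "S = {}")
    case True
    hence az: "\<alpha> = (\<lambda>_. 0)" by (auto simp: S_def)
    have "\<not> (\<exists>j. \<alpha> = (\<lambda>i. if i = j then n else 0))"
    proof
      assume "\<exists>j. \<alpha> = (\<lambda>i. if i = j then n else 0)"
      then obtain j where "\<alpha> = (\<lambda>i. if i = j then n else 0)" by blast
      hence "\<alpha> j = n" by simp
      thus False using az n by simp
    qed
    moreover have "K (hook n i) \<alpha> = 0" if "i < n" for i
      using K_zero[OF hook_part[OF that]] az by (simp add: hook_def)
    ultimately show ?thesis by (simp add: power_sum_def)
  next
    case False
    have fS: "finite S" using \<open>finite {k. \<alpha> k \<noteq> 0}\<close> S_def by simp
    define m where "m = Max S"
    define a where "a = \<alpha> m"
    define \<alpha>' where "\<alpha>' = \<alpha>(m := 0)"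
    have mS: "m \<in> S" using Max_in[OF fS False] m_def by simp
    hence a1: "1 \<le> a" by (simp add: S_def a_def)
    have sup: "\<forall>k>m. \<alpha> k = 0"
    proof (intro allI impI)
      fix k assume "m < k"
      hence "k \<notin> S" using Max_ge[OF fS] m_def by fastforce
      thus "\<alpha> k = 0" by (simp add: S_def)
    qed
    have Kexp: "int (K (hook n i) \<alpha>) =
      (if i < n - a then int (K (hook (n - a) i) \<alpha>') else 0)
      + (if 1 \<le> i \<and> i - 1 < n - a then int (K (hook (n - a) (i - 1)) \<alpha>') else 0)
      + (if a = n \<and> i = 0 then int (K [] \<alpha>') else 0)" if i: "i < n" for i
      using branch[OF hook_part[OF i] sup] sum_HS_hook[OF i a1, of "\<lambda>ka. K ka \<alpha>'"]
      unfolding a_def[symmetric] \<alpha>'_def[symmetric] by simp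
    have ps: "power_sum n \<alpha> = (if \<alpha>' = (\<lambda>_. 0) \<and> a = n then 1 else 0)"
    proof -
      have "(\<exists>j. \<alpha> = (\<lambda>i. if i = j then n else 0)) \<longleftrightarrow> (\<alpha>' = (\<lambda>_. 0) \<and> a = n)"
      proof
        assume "\<exists>j. \<alpha> = (\<lambda>i. if i = j then n else 0)"
        then obtain j where j: "\<alpha> = (\<lambda>i. if i = j then n else 0)" by blast
        have "\<alpha> m \<noteq> 0" using mS by (simp add: S_def)
        hence "m = j" using j by (auto split: if_splits)
        thus "\<alpha>' = (\<lambda>_. 0) \<and> a = n" using j by (auto simp: \<alpha>'_def a_def fun_eq_iff)
      next
        assume h: "\<alpha>' = (\<lambda>_. 0) \<and> a = n"
        have "\<alpha> = (\<lambda>i. if i = m then n else 0)"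
        proof (rule ext)
          fix i show "\<alpha> i = (if i = m then n else 0)"
          proof (cases "i = m")
            case False
            have "\<alpha>' i = 0" using h by simp
            thus ?thesis using False by (simp add: \<alpha>'_def)
          qed (use h a_def in simp)
        qed
        thus "\<exists>j. \<alpha> = (\<lambda>i. if i = j then n else 0)" by blast
      qed
      thus ?thesis by (simp add: power_sum_def)
    qed
    have "(\<Sum>i<n. (-1)^i * int (K (hook n i) \<alpha>)) =
       (\<Sum>i<n. (-1)^i * ((if i < n - a then int (K (hook (n - a) i) \<alpha>') else 0)
      + (if 1 \<le> i \<and> i - 1 < n - a then int (K (hook (n - a) (i - 1)) \<alpha>') else 0))
      + (-1)^i * (if a = n \<and> i = 0 then int (K [] \<alpha>') else 0))"
      by (rule sum.cong[OF refl]) (simp add: Kexp distrib_left)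
    also have "\<dots> = (\<Sum>i<n. (-1)^i * ((if i < n - a then int (K (hook (n - a) i) \<alpha>') else 0)
      + (if 1 \<le> i \<and> i - 1 < n - a then int (K (hook (n - a) (i - 1)) \<alpha>') else 0)))
      + (\<Sum>i<n. (-1)^i * (if a = n \<and> i = 0 then int (K [] \<alpha>') else 0))"
      by (rule sum.distrib)
    also have "(\<Sum>i<n. (-1)^i * ((if i < n - a then int (K (hook (n - a) i) \<alpha>') else 0)
      + (if 1 \<le> i \<and> i - 1 < n - a then int (K (hook (n - a) (i - 1)) \<alpha>') else 0))) = 0"
    proof (cases "a < n")
      case True
      show ?thesis using telescope[of "n - a" n "\<lambda>j. int (K (hook (n - a) j) \<alpha>')"] True a1 by simp
    next
      case False
      hence "n - a = 0" by simp
      thus ?thesis by simp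
    qed
    also have "(\<Sum>i<n. (-1)^i * (if a = n \<and> i = 0 then int (K [] \<alpha>') else 0)) =
        (if a = n then int (K [] \<alpha>') else 0)"
    proof -
      have "(\<Sum>i<n. (-1)^i * (if a = n \<and> i = 0 then int (K [] \<alpha>') else 0)) =
          (\<Sum>i\<in>{..<n}. if i = 0 then (if a = n then int (K [] \<alpha>') else 0) else 0)"
        by (rule sum.cong) auto
      also have "\<dots> = (if a = n then int (K [] \<alpha>') else 0)" using n by (simp add: sum.delta)
      finally show ?thesis .
    qed
    finally show ?thesis unfolding ps K_Nil by simp
  qed
qed



definition E :: "nat \<Rightarrow> nat \<Rightarrow> nat \<Rightarrow> nat" where "E k j = (\<lambda>i. if i = j then k else 0)"

lemma mult_inf:
  assumes "infinite {k. \<alpha> k \<noteq> 0}"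
  shows "mult_ser f g \<alpha> = 0"
proof -
  have "inj_on (E 1) {k. \<alpha> k \<noteq> 0}"
  proof (rule inj_onI)
    fix x y assume "E 1 x = E 1 y"
    hence "E 1 x x = E 1 y x" by simp
    thus "x = y" by (simp add: E_def split: if_splits)
  qed
  hence "infinite (E 1 ` {k. \<alpha> k \<noteq> 0})" using assms finite_imageD by blast
  moreover have "E 1 ` {k. \<alpha> k \<noteq> 0} \<subseteq> {\<beta>. \<forall>i. \<beta> i \<le> \<alpha> i}" by (auto simp: E_def)
  ultimately have "infinite {\<beta>. \<forall>i. \<beta> i \<le> \<alpha> i}" using finite_subset by blast
  thus ?thesis by (simp add: mult_ser_def)
qed

lemma finite_below:
  fixes \<alpha> :: "nat \<Rightarrow> nat"
  assumes "\<forall>k\<ge>m. \<alpha> k = 0"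
  shows "finite {\<beta>. \<forall>i. \<beta> i \<le> \<alpha> i}"
proof -
  define M where "M = (\<Sum>i<m. \<alpha> i)"
  have "{\<beta>. \<forall>i. \<beta> i \<le> \<alpha> i} \<subseteq> {f. \<forall>x. (x \<in> {..<m} \<longrightarrow> f x \<in> {..M}) \<and> (x \<notin> {..<m} \<longrightarrow> f x = 0)}"
  proof (rule subsetI)
    fix \<beta> assume "\<beta> \<in> {\<beta>. \<forall>i. \<beta> i \<le> \<alpha> i}"
    hence b: "\<beta> i \<le> \<alpha> i" for i by simp
    have "\<beta> x \<le> M" if "x < m" for x
    proof -
      have "\<alpha> x \<le> M" unfolding M_def by (rule member_le_sum) (use that in auto)
      thus ?thesis using b[of x] by linarith
    qed
    moreover have "\<beta> x = 0" if "\<not> x < m" for x using b[of x] assms that by simp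
    ultimately show "\<beta> \<in> {f. \<forall>x. (x \<in> {..<m} \<longrightarrow> f x \<in> {..M}) \<and> (x \<notin> {..<m} \<longrightarrow> f x = 0)}" by auto
  qed
  thus ?thesis using finite_set_of_finite_funs[of "{..<m}" "{..M}" 0] finite_subset by blast
qed

lemma fin_supp_bound: "finite {k::nat. \<alpha> k \<noteq> (0::nat)} \<Longrightarrow> \<exists>m. \<forall>k\<ge>m. \<alpha> k = 0"
proof -
  assume "finite {k. \<alpha> k \<noteq> 0}"
  define m where "m = Suc (Max (insert 0 {k. \<alpha> k \<noteq> 0}))"
  have "\<alpha> k = 0" if "m \<le> k" for k
  proof (rule ccontr)
    assume "\<alpha> k \<noteq> 0"
    hence "k \<le> Max (insert 0 {k. \<alpha> k \<noteq> 0})" using \<open>finite {k. \<alpha> k \<noteq> 0}\<close> by simp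
    thus False using that m_def by simp
  qed
  thus ?thesis by blast
qed

lemma mult_ps:
  assumes k: "1 \<le> k" and sup: "\<forall>i\<ge>m. \<alpha> i = 0"
  shows "mult_ser (power_sum k) f \<alpha> = (\<Sum>j<m. if k \<le> \<alpha> j then f (\<alpha>(j := \<alpha> j - k)) else 0)"
proof -
  define B where "B = {\<beta>. \<forall>i. \<beta> i \<le> \<alpha> i}"
  have fB: "finite B" using finite_below[OF sup] B_def by simp
  have ps: "power_sum k \<beta> = (\<Sum>j<m. if \<beta> = E k j then 1 else 0)" if "\<beta> \<in> B" for \<beta>
  proof (cases "\<exists>j. \<beta> = E k j")
    case True
    then obtain j where j: "\<beta> = E k j" by blast
    have "\<beta> j \<le> \<alpha> j" using that B_def by simp
    hence "k \<le> \<alpha> j" using j by (simp add: E_def)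
    have jm: "j < m"
    proof (rule ccontr)
      assume "\<not> j < m" hence "\<alpha> j = 0" using sup by simp
      thus False using \<open>k \<le> \<alpha> j\<close> k by simp
    qed
    have "(\<Sum>j'<m. if \<beta> = E k j' then 1 else 0) = (\<Sum>j'<m. if j' = j then 1 else (0::int))"
    proof (rule sum.cong[OF refl])
      fix j' have "(E k j = E k j') = (j = j')" using k by (auto simp: E_def fun_eq_iff)
      thus "(if \<beta> = E k j' then 1 else 0) = (if j' = j then 1 else (0::int))" using j by auto
    qed
    also have "\<dots> = 1" using jm by simp
    finally show ?thesis using True by (simp add: power_sum_def E_def)
  next
    case False
    thus ?thesis by (auto simp: power_sum_def E_def)
  qed
  have "mult_ser (power_sum k) f \<alpha> = (\<Sum>\<beta>\<in>B. power_sum k \<beta> * f (\<lambda>i. \<alpha> i - \<beta> i))"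
    by (simp add: mult_ser_def B_def)
  also have "\<dots> = (\<Sum>\<beta>\<in>B. \<Sum>j<m. if \<beta> = E k j then f (\<lambda>i. \<alpha> i - \<beta> i) else 0)"
    by (rule sum.cong[OF refl]) (auto simp: ps sum_distrib_right intro!: sum.cong)
  also have "\<dots> = (\<Sum>j<m. \<Sum>\<beta>\<in>B. if \<beta> = E k j then f (\<lambda>i. \<alpha> i - \<beta> i) else 0)" by (rule sum.swap)
  also have "\<dots> = (\<Sum>j<m. if k \<le> \<alpha> j then f (\<alpha>(j := \<alpha> j - k)) else 0)"
  proof (rule sum.cong[OF refl])
    fix j
    have "(\<Sum>\<beta>\<in>B. if \<beta> = E k j then f (\<lambda>i. \<alpha> i - \<beta> i) else 0) =
        (if E k j \<in> B then f (\<lambda>i. \<alpha> i - E k j i) else 0)"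
      using sum.delta'[OF fB, of "E k j" "\<lambda>\<beta>. f (\<lambda>i. \<alpha> i - \<beta> i)"] by (simp add: eq_commute)
    moreover have "(E k j \<in> B) = (k \<le> \<alpha> j)" by (auto simp: B_def E_def)
    moreover have "(\<lambda>i. \<alpha> i - E k j i) = \<alpha>(j := \<alpha> j - k)" by (auto simp: E_def)
    ultimately show "(\<Sum>\<beta>\<in>B. if \<beta> = E k j then f (\<lambda>i. \<alpha> i - \<beta> i) else 0) =
        (if k \<le> \<alpha> j then f (\<alpha>(j := \<alpha> j - k)) else 0)" by simp
  qed
  finally show ?thesis .
qed

lemma ps_inf: "infinite {k. \<alpha> k \<noteq> 0} \<Longrightarrow> power_sum n \<alpha> = 0"
proof -
  assume a: "infinite {k. \<alpha> k \<noteq> 0}"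
  have "\<not> (\<exists>j. \<alpha> = (\<lambda>i. if i = j then n else 0))"
  proof
    assume "\<exists>j. \<alpha> = (\<lambda>i. if i = j then n else 0)"
    then obtain j where "\<alpha> = (\<lambda>i. if i = j then n else 0)" by blast
    hence "{k. \<alpha> k \<noteq> 0} \<subseteq> {j}" by auto
    thus False using a finite_subset by blast
  qed
  thus ?thesis by (simp add: power_sum_def)
qed

lemma mult_one: "mult_ser (power_sum n) one_ser = power_sum n"
proof (rule ext)
  fix \<alpha>
  show "mult_ser (power_sum n) one_ser \<alpha> = power_sum n \<alpha>"
  proof (cases "finite {k. \<alpha> k \<noteq> 0}")
    case False thus ?thesis using mult_inf ps_inf by simp
  next
    case True
    then obtain m where m: "\<forall>k\<ge>m. \<alpha> k = 0" using fin_supp_bound by blast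
    define B where "B = {\<beta>. \<forall>i. \<beta> i \<le> \<alpha> i}"
    have fB: "finite B" using finite_below[OF m] B_def by simp
    have "mult_ser (power_sum n) one_ser \<alpha> = (\<Sum>\<beta>\<in>B. power_sum n \<beta> * one_ser (\<lambda>i. \<alpha> i - \<beta> i))"
      by (simp add: mult_ser_def B_def)
    also have "\<dots> = (\<Sum>\<beta>\<in>B. if \<beta> = \<alpha> then power_sum n \<beta> else 0)"
    proof (rule sum.cong[OF refl])
      fix \<beta> assume "\<beta> \<in> B"
      hence "((\<lambda>i. \<alpha> i - \<beta> i) = (\<lambda>_. 0)) = (\<beta> = \<alpha>)" by (auto simp: B_def fun_eq_iff le_antisym)
      thus "power_sum n \<beta> * one_ser (\<lambda>i. \<alpha> i - \<beta> i) = (if \<beta> = \<alpha> then power_sum n \<beta> else 0)"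
        by (simp add: one_ser_def)
    qed
    also have "\<dots> = power_sum n \<alpha>" using sum.delta'[OF fB, of \<alpha> "power_sum n"] by (simp add: B_def eq_commute)
    finally show ?thesis .
  qed
qed

lemma mult_lin: "finite A \<Longrightarrow> mult_ser f (\<lambda>\<alpha>. \<Sum>r\<in>A. g r \<alpha>) \<alpha> = (\<Sum>r\<in>A. mult_ser f (g r) \<alpha>)"
  unfolding mult_ser_def by (simp add: sum_distrib_left sum.swap[of _ A])

lemma mult_comm1:
  assumes k: "1 \<le> k"
  shows "mult_ser (power_sum 1) (mult_ser (power_sum k) h) = mult_ser (power_sum k) (mult_ser (power_sum 1) h)"
proof (rule ext)
  fix \<alpha>
  show "mult_ser (power_sum 1) (mult_ser (power_sum k) h) \<alpha> = mult_ser (power_sum k) (mult_ser (power_sum 1) h) \<alpha>"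
  proof (cases "finite {k. \<alpha> k \<noteq> 0}")
    case False thus ?thesis using mult_inf by simp
  next
    case True
    then obtain m where m: "\<forall>k\<ge>m. \<alpha> k = 0" using fin_supp_bound by blast
    have m1: "\<forall>i\<ge>m. (\<alpha>(j := \<alpha> j - c)) i = 0" for j c using m by auto
    have "mult_ser (power_sum 1) (mult_ser (power_sum k) h) \<alpha> =
      (\<Sum>j<m. \<Sum>i<m. if 1 \<le> \<alpha> j \<and> k \<le> (\<alpha>(j := \<alpha> j - 1)) i
         then h ((\<alpha>(j := \<alpha> j - 1))(i := (\<alpha>(j := \<alpha> j - 1)) i - k)) else 0)"
      unfolding mult_ps[OF order_refl m]
    proof (rule sum.cong[OF refl])
      fix j
      have inner: "mult_ser (power_sum k) h (\<alpha>(j := \<alpha> j - 1)) = (\<Sum>i<m. if k \<le> (\<alpha>(j := \<alpha> j - 1)) i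
         then h ((\<alpha>(j := \<alpha> j - 1))(i := (\<alpha>(j := \<alpha> j - 1)) i - k)) else 0)"
        using mult_ps[OF k m1[of j 1]] .
      show "(if 1 \<le> \<alpha> j then mult_ser (power_sum k) h (\<alpha>(j := \<alpha> j - 1)) else 0) =
        (\<Sum>i<m. if 1 \<le> \<alpha> j \<and> k \<le> (\<alpha>(j := \<alpha> j - 1)) i
         then h ((\<alpha>(j := \<alpha> j - 1))(i := (\<alpha>(j := \<alpha> j - 1)) i - k)) else 0)"
        unfolding inner by (cases "1 \<le> \<alpha> j") simp_all
    qed
    also have "\<dots> = (\<Sum>j<m. \<Sum>i<m. if k \<le> \<alpha> i \<and> 1 \<le> (\<alpha>(i := \<alpha> i - k)) j
         then h ((\<alpha>(i := \<alpha> i - k))(j := (\<alpha>(i := \<alpha> i - k)) j - 1)) else 0)"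
    proof (intro sum.cong[OF refl])
      fix i j
      show "(if 1 \<le> \<alpha> j \<and> k \<le> (\<alpha>(j := \<alpha> j - 1)) i
         then h ((\<alpha>(j := \<alpha> j - 1))(i := (\<alpha>(j := \<alpha> j - 1)) i - k)) else 0) =
        (if k \<le> \<alpha> i \<and> 1 \<le> (\<alpha>(i := \<alpha> i - k)) j
         then h ((\<alpha>(i := \<alpha> i - k))(j := (\<alpha>(i := \<alpha> i - k)) j - 1)) else 0)"
      proof (cases "i = j")
        case True
        have "(1 \<le> \<alpha> j \<and> k \<le> \<alpha> j - 1) = (k \<le> \<alpha> j \<and> 1 \<le> \<alpha> j - k)" by auto
        moreover have "\<alpha> j - 1 - k = \<alpha> j - k - 1" by simp
        ultimately show ?thesis using True by simp
      next
        case False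
        thus ?thesis by (auto simp: fun_upd_twist)
      qed
    qed
    also have "\<dots> = (\<Sum>i<m. \<Sum>j<m. if k \<le> \<alpha> i \<and> 1 \<le> (\<alpha>(i := \<alpha> i - k)) j
         then h ((\<alpha>(i := \<alpha> i - k))(j := (\<alpha>(i := \<alpha> i - k)) j - 1)) else 0)" by (rule sum.swap)
    also have "\<dots> = mult_ser (power_sum k) (mult_ser (power_sum 1) h) \<alpha>"
      unfolding mult_ps[OF k m]
    proof (rule sum.cong[OF refl])
      fix i
      have inner: "mult_ser (power_sum 1) h (\<alpha>(i := \<alpha> i - k)) = (\<Sum>j<m. if 1 \<le> (\<alpha>(i := \<alpha> i - k)) j
         then h ((\<alpha>(i := \<alpha> i - k))(j := (\<alpha>(i := \<alpha> i - k)) j - 1)) else 0)"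
        using mult_ps[OF order_refl m1[of i k]] .
      show "(\<Sum>j<m. if k \<le> \<alpha> i \<and> 1 \<le> (\<alpha>(i := \<alpha> i - k)) j
         then h ((\<alpha>(i := \<alpha> i - k))(j := (\<alpha>(i := \<alpha> i - k)) j - 1)) else 0) =
        (if k \<le> \<alpha> i then mult_ser (power_sum 1) h (\<alpha>(i := \<alpha> i - k)) else 0)"
        unfolding inner by (cases "k \<le> \<alpha> i") simp_all
    qed
    finally show ?thesis .
  qed
qed

lemma ppart_hook: "r < n \<Longrightarrow> power_sum_part (hook n r) = mult_ser (power_sum (n - r)) (power_sum_part (replicate r 1))"
  by (simp add: power_sum_part_def hook_def)

lemma Hk_Suc: "Hk (Suc n) = (\<lambda>\<alpha>. mult_ser (power_sum 1) (Hk n) \<alpha> + power_sum (Suc n) \<alpha>)"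
proof (rule ext)
  fix \<alpha>
  have Hkn: "Hk n = (\<lambda>\<alpha>. \<Sum>r<n. power_sum_part (hook n r) \<alpha>)" by (rule ext) (simp add: Hk_def)
  have "Hk (Suc n) \<alpha> = power_sum_part (hook (Suc n) 0) \<alpha> + (\<Sum>r<n. power_sum_part (hook (Suc n) (Suc r)) \<alpha>)"
    unfolding Hk_def by (rule sum.lessThan_Suc_shift)
  also have "power_sum_part (hook (Suc n) 0) \<alpha> = power_sum (Suc n) \<alpha>"
    using mult_one[of "Suc n"] by (simp add: power_sum_part_def hook_def)
  also have "(\<Sum>r<n. power_sum_part (hook (Suc n) (Suc r)) \<alpha>) = (\<Sum>r<n. mult_ser (power_sum 1) (power_sum_part (hook n r)) \<alpha>)"
  proof (rule sum.cong[OF refl])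
    fix r assume "r \<in> {..<n}"
    hence r: "r < n" by simp
    have "power_sum_part (hook (Suc n) (Suc r)) =
        mult_ser (power_sum (n - r)) (mult_ser (power_sum 1) (power_sum_part (replicate r 1)))"
      using r by (simp add: power_sum_part_def hook_def)
    also have "\<dots> = mult_ser (power_sum 1) (mult_ser (power_sum (n - r)) (power_sum_part (replicate r 1)))"
      using mult_comm1[of "n - r"] r by simp
    also have "\<dots> = mult_ser (power_sum 1) (power_sum_part (hook n r))" using ppart_hook[OF r] by simp
    finally show "power_sum_part (hook (Suc n) (Suc r)) \<alpha> = mult_ser (power_sum 1) (power_sum_part (hook n r)) \<alpha>" by simp
  qed
  also have "\<dots> = mult_ser (power_sum 1) (Hk n) \<alpha>" unfolding Hkn by (rule mult_lin[symmetric]) simp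
  finally show "Hk (Suc n) \<alpha> = mult_ser (power_sum 1) (Hk n) \<alpha> + power_sum (Suc n) \<alpha>" by simp
qed



definition hookcoef :: "nat \<Rightarrow> nat list \<Rightarrow> int" where
  "hookcoef N la = (\<Sum>i<N. if la = hook N i then (-1)^i else 0)"

primrec cc :: "nat \<Rightarrow> nat list \<Rightarrow> int" where
  "cc 0 la = 0"
| "cc (Suc n) la = (\<Sum>mu\<in>{mu \<in> Parts n. la \<in> covers mu}. cc n mu) + hookcoef (Suc n) la"

lemma covers_sub: "mu \<in> Parts n \<Longrightarrow> covers mu \<subseteq> Parts (Suc n)"
  by (auto simp: covers_def Parts_def is_partition_def)

lemma Hk_expand: "Hk n = (\<lambda>\<alpha>. \<Sum>la\<in>Parts n. cc n la * int (K la \<alpha>))"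
proof (induction n)
  case 0
  show ?case by (rule ext) (simp add: Hk_def)
next
  case (Suc n)
  show ?case
  proof (rule ext)
    fix \<alpha>
    show "Hk (Suc n) \<alpha> = (\<Sum>la\<in>Parts (Suc n). cc (Suc n) la * int (K la \<alpha>))"
    proof (cases "finite {k. \<alpha> k \<noteq> 0}")
      case False
      thus ?thesis unfolding Hk_Suc using mult_inf[OF False] ps_inf[OF False] K_inf[OF False] by simp
    next
      case True
      then obtain m where m: "\<forall>k\<ge>m. \<alpha> k = 0" using fin_supp_bound by blast
      have A: "mult_ser (power_sum 1) (Hk n) \<alpha> =
          (\<Sum>la\<in>Parts (Suc n). (\<Sum>mu\<in>{mu \<in> Parts n. la \<in> covers mu}. cc n mu) * int (K la \<alpha>))"
      proof -
        have "mult_ser (power_sum 1) (Hk n) \<alpha> = (\<Sum>j<m. if 1 \<le> \<alpha> j then Hk n (\<alpha>(j := \<alpha> j - 1)) else 0)"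
          by (rule mult_ps[OF order_refl m])
        also have "\<dots> = (\<Sum>j<m. \<Sum>mu\<in>Parts n. cc n mu * int (if 1 \<le> \<alpha> j then K mu (\<alpha>(j := \<alpha> j - 1)) else 0))"
          unfolding Suc.IH by (rule sum.cong[OF refl]) simp
        also have "\<dots> = (\<Sum>mu\<in>Parts n. cc n mu * int (\<Sum>j<m. if 1 \<le> \<alpha> j then K mu (\<alpha>(j := \<alpha> j - 1)) else 0))"
          by (subst sum.swap) (simp add: sum_distrib_left)
        also have "\<dots> = (\<Sum>mu\<in>Parts n. cc n mu * int (\<Sum>la\<in>covers mu. K la \<alpha>))"
        proof (rule sum.cong[OF refl])
          fix mu assume "mu \<in> Parts n"
          hence "is_partition n mu" by (simp add: Parts_def)
          show "cc n mu * int (\<Sum>j<m. if 1 \<le> \<alpha> j then K mu (\<alpha>(j := \<alpha> j - 1)) else 0) =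
              cc n mu * int (\<Sum>la\<in>covers mu. K la \<alpha>)"
            by (simp only: pieri[OF m \<open>is_partition n mu\<close>])
        qed
        also have "\<dots> = (\<Sum>mu\<in>Parts n. \<Sum>la\<in>covers mu. cc n mu * int (K la \<alpha>))"
          by (simp add: sum_distrib_left)
        also have "\<dots> = (\<Sum>la\<in>Parts (Suc n). \<Sum>mu\<in>{mu \<in> Parts n. la \<in> covers mu}. cc n mu * int (K la \<alpha>))"
          by (rule sum_swap_gen[OF finite_Parts finite_Parts]) (use covers_sub in blast)
        also have "\<dots> = (\<Sum>la\<in>Parts (Suc n). (\<Sum>mu\<in>{mu \<in> Parts n. la \<in> covers mu}. cc n mu) * int (K la \<alpha>))"
          by (simp add: sum_distrib_right)
        finally show ?thesis .
      qed
      have B: "power_sum (Suc n) \<alpha> = (\<Sum>la\<in>Parts (Suc n). hookcoef (Suc n) la * int (K la \<alpha>))"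
      proof -
        have "(\<Sum>la\<in>Parts (Suc n). hookcoef (Suc n) la * int (K la \<alpha>)) =
            (\<Sum>la\<in>Parts (Suc n). \<Sum>i<Suc n. if la = hook (Suc n) i then (-1)^i * int (K la \<alpha>) else 0)"
          unfolding hookcoef_def sum_distrib_right by (intro sum.cong refl) auto
        also have "\<dots> = (\<Sum>i<Suc n. \<Sum>la\<in>Parts (Suc n). if la = hook (Suc n) i then (-1)^i * int (K la \<alpha>) else 0)"
          by (rule sum.swap)
        also have "\<dots> = (\<Sum>i<Suc n. (-1)^i * int (K (hook (Suc n) i) \<alpha>))"
        proof (rule sum.cong[OF refl])
          fix i assume "i \<in> {..<Suc n}"
          hence "hook (Suc n) i \<in> Parts (Suc n)" using hook_part by (simp add: Parts_def)
          thus "(\<Sum>la\<in>Parts (Suc n). if la = hook (Suc n) i then (-1)^i * int (K la \<alpha>) else 0) =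
              (-1)^i * int (K (hook (Suc n) i) \<alpha>)"
            using sum.delta[OF finite_Parts, of "hook (Suc n) i" "\<lambda>la. (-1)^i * int (K la \<alpha>)"] by simp
        qed
        finally show ?thesis using pn_expand[of "Suc n" \<alpha>] by simp
      qed
      show ?thesis unfolding Hk_Suc A B by (simp add: sum.distrib[symmetric] distrib_right)
    qed
  qed
qed



lemma rep_hook: "1 \<le> n \<Longrightarrow> replicate n 1 = hook n (n - 1)"
  by (cases n) (simp_all add: hook_def)

lemma hookcoef_hook: "i < N \<Longrightarrow> hookcoef N (hook N i) = (-1)^i"
proof -
  assume i: "i < N"
  have "hookcoef N (hook N i) = (\<Sum>i'<N. if i' = i then (-1)^i' else 0)"
    unfolding hookcoef_def by (rule sum.cong[OF refl]) (auto dest: hook_inj)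
  also have "\<dots> = (-1)^i" using i by (simp add: sum.delta)
  finally show ?thesis .
qed

lemma hookcoef_nonhook: "(\<forall>i<N. la \<noteq> hook N i) \<Longrightarrow> hookcoef N la = 0"
  unfolding hookcoef_def by simp

lemma covers_hook:
  assumes n: "1 \<le> n" and i: "i \<le> n"
  shows "{mu \<in> Parts n. hook (Suc n) i \<in> covers mu} =
    (if i < n then {hook n i} else {}) \<union> (if 1 \<le> i then {hook n (i - 1)} else {})"
proof -
  have sh: "sum_list (hook (Suc n) i) = Suc n" using sum_hook[of "Suc n" i] i by simp
  have hp: "is_partition (Suc n) (hook (Suc n) i)" using hook_part i by simp
  have "{mu \<in> Parts n. hook (Suc n) i \<in> covers mu} = HS (hook (Suc n) i) 1"
  proof (rule set_eqI)
    fix mu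
    show "(mu \<in> {mu \<in> Parts n. hook (Suc n) i \<in> covers mu}) = (mu \<in> HS (hook (Suc n) i) 1)"
    proof
      assume "mu \<in> {mu \<in> Parts n. hook (Suc n) i \<in> covers mu}"
      hence "is_partition n mu" "hs mu (hook (Suc n) i)" by (auto simp: Parts_def covers_def)
      thus "mu \<in> HS (hook (Suc n) i) 1" using sh by (simp add: HS_def Parts_def)
    next
      assume "mu \<in> HS (hook (Suc n) i) 1"
      hence "is_partition n mu" "hs mu (hook (Suc n) i)" using sh by (auto simp: HS_def Parts_def)
      thus "mu \<in> {mu \<in> Parts n. hook (Suc n) i \<in> covers mu}"
        using hp part_sum[of n mu] by (simp add: Parts_def covers_def)
    qed
  qed
  also have "\<dots> = (if i < n then {hook n i} else {}) \<union> (if 1 \<le> i then {hook n (i - 1)} else {})"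
  proof -
    have isn: "i < Suc n" using i by simp
    show ?thesis unfolding HS_hook[OF isn order_refl] using i n by auto
  qed
  finally show ?thesis .
qed

lemma cc_hook:
  assumes n: "1 \<le> n" and i: "i \<le> n"
  shows "cc (Suc n) (hook (Suc n) i) =
    (if i < n then cc n (hook n i) else 0) + (if 1 \<le> i then cc n (hook n (i - 1)) else 0) + (-1)^i"
proof -
  define S1 where "S1 = (if i < n then {hook n i} else {})"
  define S2 where "S2 = (if 1 \<le> i then {hook n (i - 1)} else {})"
  have d: "S1 \<inter> S2 = {}"
  proof -
    have "hook n i \<noteq> hook n (i - 1)" if "1 \<le> i" using hook_inj that by fastforce
    thus ?thesis by (auto simp: S1_def S2_def)
  qed
  have "(\<Sum>mu\<in>{mu \<in> Parts n. hook (Suc n) i \<in> covers mu}. cc n mu) = (\<Sum>mu\<in>S1 \<union> S2. cc n mu)"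
    unfolding covers_hook[OF n i] S1_def S2_def ..
  also have "\<dots> = (\<Sum>mu\<in>S1. cc n mu) + (\<Sum>mu\<in>S2. cc n mu)"
    by (rule sum.union_disjoint) (use d in \<open>auto simp: S1_def S2_def\<close>)
  finally show ?thesis using hookcoef_hook[of i "Suc n"] i by (simp add: S1_def S2_def)
qed

lemma nonhook_struct:
  assumes la: "is_partition (Suc n) la" and nh: "\<forall>i\<le>n. la \<noteq> hook (Suc n) i"
  shows "2 \<le> length la \<and> 2 \<le> la ! 1"
proof (rule ccontr)
  assume c: "\<not> (2 \<le> length la \<and> 2 \<le> la ! 1)"
  define L where "L = length la"
  have L1: "1 \<le> L" using la by (cases la) (auto simp: is_partition_def L_def)
  have pos: "k < L \<Longrightarrow> 0 < pt la k" for k using part_pt_pos[OF la] L_def by simp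
  have tail: "pt la (Suc k) = pt (hook X (L - 1)) (Suc k)" for k X
  proof (cases "Suc k < L")
    case True
    hence "2 \<le> L" by simp
    hence "la ! 1 \<le> 1" using c L_def by simp
    hence "pt la 1 \<le> 1" using \<open>2 \<le> L\<close> by (simp add: pt_def L_def)
    moreover have "pt la (Suc k) \<le> pt la 1" using decr_mono[OF part_decr[OF la], of 1 "Suc k"] by simp
    ultimately have "pt la (Suc k) = 1" using pos[OF True] by simp
    thus ?thesis using True by (simp add: pt_hook)
  next
    case False
    hence "pt la (Suc k) = 0" by (simp add: pt_def L_def)
    moreover have "pt (hook X (L - 1)) (Suc k) = 0" using False by (simp add: pt_hook)
    ultimately show ?thesis by simp
  qed
  have "Suc n = pt la 0 + (\<Sum>k<L. pt la (Suc k))"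
    using sum_list_tail[of la L] part_sum[OF la] L_def by simp
  also have "(\<Sum>k<L. pt la (Suc k)) = L - 1"
    using tail[of _ 0] tail_hook[of "L - 1" L 0] by simp
  finally have s: "Suc n = pt la 0 + (L - 1)" .
  have "0 < pt la 0" using pos L1 by simp
  hence Ln: "L - 1 \<le> n" using s by simp
  have hp: "is_partition (Suc n) (hook (Suc n) (L - 1))" using hook_part Ln by simp
  have "pt la = pt (hook (Suc n) (L - 1))"
  proof (rule ext)
    fix k show "pt la k = pt (hook (Suc n) (L - 1)) k"
    proof (cases k)
      case 0 thus ?thesis using s by (simp add: pt_hook)
    next
      case (Suc k') thus ?thesis using tail by simp
    qed
  qed
  hence "la = hook (Suc n) (L - 1)" using part_inj[OF la hp] by simp
  thus False using nh Ln by blast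
qed

lemma remove_corner:
  assumes la: "is_partition (Suc n) la" and L2: "2 \<le> length la" and l1: "2 \<le> la ! 1"
  shows "\<exists>mu\<in>Parts n. la \<in> covers mu \<and> mu \<noteq> replicate n 1"
proof -
  define L where "L = length la"
  define f where "f = (\<lambda>k. pt la k - eu (L - 1) k)"
  have dl: "pt la (Suc k) \<le> pt la k" for k using part_decr[OF la] by (simp add: decr_def)
  have "L - 1 < length la" using L2 L_def by simp
  hence lastpos: "1 \<le> pt la (L - 1)" using part_pt_pos[OF la, of "L - 1"] by simp
  have df: "decr f" unfolding decr_def
  proof
    fix k
    show "f (Suc k) \<le> f k"
    proof (cases "k = L - 1")
      case True
      hence "\<not> Suc k < length la" using L2 L_def by simp
      hence "pt la (Suc k) = 0" by (simp add: pt_def)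
      thus ?thesis by (simp add: f_def)
    next
      case False
      thus ?thesis using dl[of k] by (auto simp: f_def eu_def)
    qed
  qed
  have zf: "\<forall>k\<ge>L. f k = 0" by (auto simp: f_def pt_def L_def)
  define mu where "mu = mk f L"
  note mp = mk_props[OF df zf]
  have ptmu: "pt mu = f" using mp(1) mu_def by simp
  have "(\<Sum>k<L. f k) = (\<Sum>k<L. pt la k) - 1"
  proof -
    have "L - 1 < L" using L2 L_def by simp
    thus ?thesis unfolding f_def using sum_eu_minus[of "L - 1" L "pt la"] lastpos by simp
  qed
  also have "(\<Sum>k<L. pt la k) = Suc n" using sum_list_pt[of la L] part_sum[OF la] L_def by simp
  finally have "(\<Sum>k<L. f k) = n" by simp
  hence mup: "is_partition n mu" using mp(2) mu_def by simp
  have "hsf f (pt la)" unfolding hsf_def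
  proof
    fix k
    have "pt la (Suc k) \<le> f k"
    proof (cases "k = L - 1")
      case True
      hence "\<not> Suc k < length la" using L2 L_def by simp
      hence "pt la (Suc k) = 0" by (simp add: pt_def)
      thus ?thesis by simp
    next
      case False
      thus ?thesis using dl[of k] by (simp add: f_def eu_def)
    qed
    thus "pt la (Suc k) \<le> f k \<and> f k \<le> pt la k" by (simp add: f_def)
  qed
  hence "hs mu la" using ptmu by (simp add: hs_def)
  hence cov: "la \<in> covers mu" using la part_sum[OF mup] by (simp add: covers_def Parts_def)
  have "pt mu 0 = pt la 0" using ptmu L2 L_def by (simp add: f_def eu_def)
  moreover have "pt la 1 \<le> pt la 0" using dl[of 0] by simp
  moreover have "pt la 1 = la ! 1" using L2 by (simp add: pt_def)
  ultimately have "2 \<le> pt mu 0" using l1 by simp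
  moreover have "pt (replicate n 1) 0 \<le> 1" by (simp add: pt_def)
  ultimately have "mu \<noteq> replicate n 1" by auto
  thus ?thesis using mup cov by (auto simp: Parts_def)
qed

lemma finite_covset: "finite {mu \<in> Parts n. la \<in> covers mu}"
  using finite_Parts by simp

lemma cc_pos:
  assumes "1 \<le> n"
  shows "(\<forall>la\<in>Parts n. 0 \<le> cc n la) \<and> (\<forall>la\<in>Parts n. la \<noteq> replicate n 1 \<longrightarrow> 1 \<le> cc n la)
    \<and> cc n (replicate n 1) = (if odd n then 1 else 0)
    \<and> (2 \<le> n \<longrightarrow> cc n (hook n (n - 2)) = (if even n then int (n div 2) + 1 else int ((n - 1) div 2)))"
  using assms
proof (induction n)
  case 0 thus ?case by simp
next
  case (Suc n)
  show ?case
  proof (cases "n = 0")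
    case True
    have P1: "Parts 1 = {hook 1 0}"
    proof (rule set_eqI)
      fix la show "(la \<in> Parts 1) = (la \<in> {hook 1 0})"
      proof
        assume "la \<in> Parts 1"
        hence la: "is_partition (Suc 0) la" by (simp add: Parts_def)
        show "la \<in> {hook 1 0}"
        proof (rule ccontr)
          assume "la \<notin> {hook 1 0}"
          hence "\<forall>i\<le>0. la \<noteq> hook (Suc 0) i" by simp
          from nonhook_struct[OF la this] have "2 \<le> length la" "2 \<le> la ! 1" by auto
          hence "la ! 1 \<le> sum_list la" using elem_le_sum_list[of 1 la] by simp
          thus False using part_sum[OF la] \<open>2 \<le> la ! 1\<close> by simp
        qed
      next
        assume "la \<in> {hook 1 0}" thus "la \<in> Parts 1" using hook_part[of 0 1] by (simp add: Parts_def)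
      qed
    qed
    have c1: "cc 1 (hook 1 0) = 1"
    proof -
      have "{mu \<in> Parts 0. hook 1 0 \<in> covers mu} \<subseteq> Parts 0" by blast
      hence "(\<Sum>mu\<in>{mu \<in> Parts 0. hook 1 0 \<in> covers mu}. cc 0 mu) = 0" by simp
      thus ?thesis using hookcoef_hook[of 0 1] by simp
    qed
    have "replicate 1 1 = hook 1 0" by (simp add: hook_def)
    thus ?thesis using True P1 c1 by simp
  next
    case False
    hence n1: "1 \<le> n" by simp
    note IH = Suc.IH[OF n1]
    have nn: "0 \<le> cc n la" if "la \<in> Parts n" for la using IH that by blast
    have pp: "1 \<le> cc n la" if "la \<in> Parts n" "la \<noteq> replicate n 1" for la using IH that by blast
    have rv: "cc n (replicate n 1) = (if odd n then 1 else 0)" using IH by blast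
    have hv: "2 \<le> n \<Longrightarrow> cc n (hook n (n - 2)) = (if even n then int (n div 2) + 1 else int ((n - 1) div 2))"
      using IH by blast
    have hP: "j < n \<Longrightarrow> hook n j \<in> Parts n" for j using hook_part by (simp add: Parts_def)
    have hnr: "j < n - 1 \<Longrightarrow> hook n j \<noteq> replicate n 1" for j
      using rep_hook[OF n1] hook_inj by fastforce
    have hook_vals: "cc (Suc n) (hook (Suc n) i) =
      (if i < n then cc n (hook n i) else 0) + (if 1 \<le> i then cc n (hook n (i - 1)) else 0) + (-1)^i"
      if "i \<le> n" for i using cc_hook[OF n1 that] .
    have hook_ok: "0 \<le> cc (Suc n) (hook (Suc n) i) \<and> (i < n \<longrightarrow> 1 \<le> cc (Suc n) (hook (Suc n) i))"
      if i: "i \<le> n" for i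
    proof (cases "even i")
      case True
      have a: "0 \<le> (if i < n then cc n (hook n i) else 0)" using nn hP by simp
      have b: "0 \<le> (if 1 \<le> i then cc n (hook n (i - 1)) else 0)" using nn hP i n1 by simp
      have e: "cc (Suc n) (hook (Suc n) i) = (if i < n then cc n (hook n i) else 0)
          + (if 1 \<le> i then cc n (hook n (i - 1)) else 0) + 1" using hook_vals[OF i] True by simp
      have "1 \<le> cc (Suc n) (hook (Suc n) i)" using e a b by linarith
      thus ?thesis by simp
    next
      case False
      hence i1: "1 \<le> i" by (cases i) auto
      show ?thesis
      proof (cases "i < n")
        case False
        hence "i = n" using i by simp
        hence "cc (Suc n) (hook (Suc n) i) = cc n (hook n (n - 1)) + (-1)^n"
          using hook_vals[OF i] i1 by simp
        also have "cc n (hook n (n - 1)) = (if odd n then 1 else 0)" using rv rep_hook[OF n1] by simp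
        finally show ?thesis using \<open>i = n\<close> by simp
      next
        case True
        have "2 \<le> (if i < n then cc n (hook n i) else 0) + (if 1 \<le> i then cc n (hook n (i - 1)) else 0)"
        proof (cases "i < n - 1")
          case True
          have "1 \<le> cc n (hook n i)" using pp[OF hP hnr[OF True]] \<open>i < n\<close> by simp
          moreover have "1 \<le> cc n (hook n (i - 1))" using pp[OF hP hnr] True i1 by simp
          ultimately show ?thesis using \<open>i < n\<close> i1 by simp
        next
          case False
          hence iv: "i = n - 1" using \<open>i < n\<close> by simp
          hence nS: "n = Suc i" using \<open>i < n\<close> by simp
          hence ev: "even n" "2 \<le> n" using \<open>odd i\<close> i1 by simp_all
          have "cc n (hook n i) = 0" using rv rep_hook[OF n1] iv ev by simp
          moreover have "cc n (hook n (i - 1)) = int (n div 2) + 1" using hv[OF ev(2)] iv ev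
            by (simp add: numeral_2_eq_2)
          moreover have "1 \<le> n div 2" using ev by simp
          ultimately show ?thesis using \<open>i < n\<close> i1 by simp
        qed
        moreover have "cc (Suc n) (hook (Suc n) i) = (if i < n then cc n (hook n i) else 0)
          + (if 1 \<le> i then cc n (hook n (i - 1)) else 0) - 1" using hook_vals[OF i] \<open>odd i\<close> by simp
        ultimately have "1 \<le> cc (Suc n) (hook (Suc n) i)" by linarith
        thus ?thesis by simp
      qed
    qed
    have nonhook_ok: "1 \<le> cc (Suc n) la" if la: "la \<in> Parts (Suc n)" and nh: "\<forall>i\<le>n. la \<noteq> hook (Suc n) i" for la
    proof -
      have lap: "is_partition (Suc n) la" using la by (simp add: Parts_def)
      from nonhook_struct[OF lap nh] obtain mu where mu: "mu \<in> Parts n" "la \<in> covers mu" "mu \<noteq> replicate n 1"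
        using remove_corner[OF lap] by blast
      have "cc n mu \<le> (\<Sum>mu\<in>{mu \<in> Parts n. la \<in> covers mu}. cc n mu)"
        by (rule member_le_sum) (use mu nn finite_covset in auto)
      moreover have "hookcoef (Suc n) la = 0" using nh by (intro hookcoef_nonhook) auto
      ultimately show ?thesis using pp[OF mu(1) mu(3)] by simp
    qed
    have allnn: "\<forall>la\<in>Parts (Suc n). 0 \<le> cc (Suc n) la"
    proof
      fix la assume la: "la \<in> Parts (Suc n)"
      show "0 \<le> cc (Suc n) la"
      proof (cases "\<exists>i\<le>n. la = hook (Suc n) i")
        case True thus ?thesis using hook_ok by blast
      next
        case False thus ?thesis using nonhook_ok[OF la] by force
      qed
    qed
    have allpos: "\<forall>la\<in>Parts (Suc n). la \<noteq> replicate (Suc n) 1 \<longrightarrow> 1 \<le> cc (Suc n) la"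
    proof (intro ballI impI)
      fix la assume la: "la \<in> Parts (Suc n)" and nr: "la \<noteq> replicate (Suc n) 1"
      show "1 \<le> cc (Suc n) la"
      proof (cases "\<exists>i\<le>n. la = hook (Suc n) i")
        case True
        then obtain i where i: "i \<le> n" "la = hook (Suc n) i" by blast
        have "i \<noteq> n" using nr i rep_hook[of "Suc n"] by auto
        thus ?thesis using hook_ok[OF i(1)] i by simp
      next
        case False thus ?thesis using nonhook_ok[OF la] by force
      qed
    qed
    have repv: "cc (Suc n) (replicate (Suc n) 1) = (if odd (Suc n) then 1 else 0)"
    proof -
      have "cc (Suc n) (replicate (Suc n) 1) = cc (Suc n) (hook (Suc n) n)" using rep_hook[of "Suc n"] by simp
      also have "\<dots> = cc n (hook n (n - 1)) + (-1)^n" using hook_vals[of n] n1 by simp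
      also have "cc n (hook n (n - 1)) = (if odd n then 1 else 0)" using rv rep_hook[OF n1] by simp
      finally show ?thesis by simp
    qed
    have hookv: "cc (Suc n) (hook (Suc n) (Suc n - 2)) =
        (if even (Suc n) then int (Suc n div 2) + 1 else int ((Suc n - 1) div 2))"
    proof (cases "n = 1")
      case True
      have "cc (Suc n) (hook (Suc n) (Suc n - 2)) = cc 1 (hook 1 0) + 1"
        using hook_vals[of 0] True by simp
      also have "cc 1 (hook 1 0) = 1" using rv True rep_hook[of 1] by simp
      finally show ?thesis using True by simp
    next
      case False
      hence n2: "2 \<le> n" using n1 by simp
      have "cc (Suc n) (hook (Suc n) (Suc n - 2)) = cc n (hook n (n - 1)) + cc n (hook n (n - 2)) + (-1)^(n - 1)"
      proof -
        have f: "n - 1 \<le> n" "n - 1 < n" "1 \<le> n - 1" "n - 1 - 1 = n - 2" "Suc n - 2 = n - 1" using n2 by auto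
        show ?thesis unfolding f(5) using hook_vals[OF f(1)] f(2,3,4) by simp
      qed
      also have "cc n (hook n (n - 1)) = (if odd n then 1 else 0)" using rv rep_hook[OF n1] by simp
      also have "cc n (hook n (n - 2)) = (if even n then int (n div 2) + 1 else int ((n - 1) div 2))"
        using hv[OF n2] .
      finally have E: "cc (Suc n) (hook (Suc n) (Suc n - 2)) = (if odd n then 1 else 0) +
          (if even n then int (n div 2) + 1 else int ((n - 1) div 2)) + (-1)^(n - 1)" .
      show ?thesis
      proof (cases "even n")
        case True
        then obtain q where q: "n = 2 * q" by blast
        hence "q \<ge> 1" using n2 by simp
        thus ?thesis using E True q by (simp add: power_mult)
      next
        case False
        then obtain q where q: "n = 2 * q + 1" using oddE by blast
        thus ?thesis using E False q by (simp add: power_mult)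
      qed
    qed
    show ?thesis using allnn allpos repv hookv by blast
  qed
qed



theorem proposition2p18:
  fixes n :: nat
  assumes "n \<ge> 1"
  shows "\<exists>c :: nat list \<Rightarrow> nat.
           Hk n = (%\<alpha>. \<Sum>la\<in>{la. is_partition n la}. int (c la) * schur la \<alpha>)
         \<and> (odd n \<longrightarrow> (\<forall>la. is_partition n la \<longrightarrow> c la > 0))
         \<and> (even n \<longrightarrow> (\<forall>la. is_partition n la \<longrightarrow> la \<noteq> replicate n 1 \<longrightarrow> c la > 0)
                        \<and> c (replicate n 1) = 0)"
proof -
  define c where "c = (\<lambda>la. nat (cc n la))"
  note pos = cc_pos[OF assms]
  have nn: "0 \<le> cc n la" if "is_partition n la" for la using pos that by (auto simp: Parts_def)
  have pp: "1 \<le> cc n la" if "is_partition n la" "la \<noteq> replicate n 1" for la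
    using pos that by (auto simp: Parts_def)
  have rv: "cc n (replicate n 1) = (if odd n then 1 else 0)" using pos by blast
  have E: "Hk n = (\<lambda>\<alpha>. \<Sum>la\<in>{la. is_partition n la}. int (c la) * schur la \<alpha>)"
  proof (rule ext)
    fix \<alpha>
    have "Hk n \<alpha> = (\<Sum>la\<in>Parts n. cc n la * int (K la \<alpha>))" by (simp add: Hk_expand)
    also have "\<dots> = (\<Sum>la\<in>{la. is_partition n la}. int (c la) * schur la \<alpha>)"
      unfolding Parts_def
    proof (rule sum.cong[OF refl])
      fix la assume "la \<in> {la. is_partition n la}"
      hence "int (c la) = cc n la" using nn by (simp add: c_def)
      thus "cc n la * int (K la \<alpha>) = int (c la) * schur la \<alpha>" by (simp add: schur_def K_def)
    qed
    finally show "Hk n \<alpha> = (\<Sum>la\<in>{la. is_partition n la}. int (c la) * schur la \<alpha>)" .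
  qed
  have O: "odd n \<longrightarrow> (\<forall>la. is_partition n la \<longrightarrow> c la > 0)"
  proof (intro impI allI)
    fix la assume o: "odd n" and la: "is_partition n la"
    show "c la > 0"
    proof (cases "la = replicate n 1")
      case True thus ?thesis using rv o by (simp add: c_def)
    next
      case False thus ?thesis using pp[OF la False] by (simp add: c_def)
    qed
  qed
  have V: "even n \<longrightarrow> (\<forall>la. is_partition n la \<longrightarrow> la \<noteq> replicate n 1 \<longrightarrow> c la > 0)
                        \<and> c (replicate n 1) = 0"
  proof (intro impI conjI allI)
    fix la assume "even n" "is_partition n la" "la \<noteq> replicate n 1"
    thus "c la > 0" using pp[of la] by (simp add: c_def)
  next
    assume "even n" thus "c (replicate n 1) = 0" using rv by (simp add: c_def)
  qed
  show ?thesis using E O V by blast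
qed


end
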